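(* Let $K$ be a sequence with continuous leading block distribution under $\mathcal F$-expansion, with associated function $f_K^*$. Then there is a uniform continuation $f$ of $F$ such that $f_\infty^{-1}=f_K^*$ and $\{f^{-1}(K_n)\}$ is equidistributed.
   Context: $F$: $F_1=1,F_2=2,F_{n+2}=F_{n+1}+F_n$; $\phi$ golden ratio, $\omega=\phi^{-1}$. Zeckendorf expansion $m=\sum_{k=1}^M\epsilon(k)F_{M-k+1}$ (unique, $\epsilon(k)\in\{0,1\}$, $\epsilon(1)=1$, $\epsilon(k)\epsilon(k+1)=0$); $\mathrm{LB}_s(m)=(\epsilon(1),\dots,\epsilon(s))$ if $M\ge s$. Blocks of equal length are compared lexicographically. $\mathcal F^*$: infinite 0/1 sequences $\mu$ with $\mu(k)\mu(k+1)=0$ and no tail equal to $(1,0,1,0,\dots)$; $\mu|s=(\mu(1),\dots,\mu(s))$, $\mu\cdot\widehat F=\sum_{k\ge1}\mu(k)\omega^{k-1}$; $\mu\mapsto\phi(\mu\cdot\widehat F-1)$ is a bijection from $\{\mu\in\mathcal F^*:\mu(1)=1\}$ onto $(0,1)$. $K$ (positive integers, $K_n\to\infty$) has continuous leading block distribution under $\mathcal F$-expansion if: for every $s\ge2$ and leading block $\mathbf b$ of length $s$ the limit $\lim_n\#\{k\le n:\mathrm{LB}_s(K_k)=\mathbf b\}/n$ exists; for every $\mu\in\mathcal F^*$ with $\mu(1)=1$, $\lim_{s\to\infty}\lim_n\#\{k\le n:\mathrm{LB}_s(K_k)\le\mu|s\}/n$ exists; and $f_K^*:[0,1]\to[0,1]$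 defined by $f_K^*(0)=0$, $f_K^*(1)=1$, $f_K^*(\phi(\mu\cdot\widehat F-1))=$ that limit, is continuous and increasing. A uniform continuation of $F$ is an increasing continuous $f:[1,\infty)\to\mathbb{R}$ with $f(n)=F_n$ such that $f_n(p)=\frac{f(n+p)-f(n)}{f(n+1)-f(n)}$ converges uniformly on $[0,1]$ to an increasing continuous function $f_\infty$. $\{x_n\}$ equidistributed means $\lim_n\#\{k\le n:\{x_k\}\le\beta\}/n=\beta$ for all $\beta\in[0,1]$. *)

theory Defs
  imports "HOL-Analysis.Analysis"
begin

text \<open>Fibonacci numbers F with F 1 = 1, F 2 = 2, F (n+2) = F (n+1) + F n.
  (The value at 0 is a junk value chosen so that the recurrence also holds there.)\<close>
fun FF :: "nat \<Rightarrow> nat" where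
  "FF 0 = 1"
| "FF (Suc 0) = 1"
| "FF (Suc (Suc n)) = FF (Suc n) + FF n"

text \<open>Zeckendorf digit lists (epsilon(1), ..., epsilon(M)), most significant digit first.\<close>
definition zeck_valid :: "nat list \<Rightarrow> bool" where
  "zeck_valid xs \<longleftrightarrow> xs \<noteq> [] \<and> hd xs = 1 \<and> set xs \<subseteq> {0, 1} \<and>
     (\<forall>i. Suc i < length xs \<longrightarrow> xs ! i * xs ! Suc i = 0)"

text \<open>value: sum_{k=1}^M epsilon(k) F_{M-k+1}; list index i corresponds to k = i+1\<close>
definition zeck_val :: "nat list \<Rightarrow> nat" where
  "zeck_val xs = (\<Sum>i<length xs. xs ! i * FF (length xs - i))"

definition zeck :: "nat \<Rightarrow> nat list" where
  "zeck m = (THE xs. zeck_valid xs \<and> zeck_val xs = m)"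

definition LB :: "nat \<Rightarrow> nat \<Rightarrow> nat list option" where
  "LB s m = (if s \<le> length (zeck m) then Some (take s (zeck m)) else None)"

definition lex_le :: "nat list \<Rightarrow> nat list \<Rightarrow> bool" where
  "lex_le xs ys \<longleftrightarrow> xs = ys \<or> (xs, ys) \<in> lexord {(a, b). a < b}"

text \<open>The set F*; sequences are indexed from 0 here, i.e. mu k is the paper's mu(k+1).\<close>
definition Fstar :: "(nat \<Rightarrow> nat) set" where
  "Fstar = {\<mu>. (\<forall>k. \<mu> k \<in> {0, 1}) \<and> (\<forall>k. \<mu> k * \<mu> (Suc k) = 0) \<and>
              \<not> (\<exists>j. \<forall>i. \<mu> (j + 2 * i) = 1 \<and> \<mu> (j + 2 * i + 1) = 0)}"

definition restr :: "(nat \<Rightarrow> nat) \<Rightarrow> nat \<Rightarrow> nat list" where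
  "restr \<mu> s = map \<mu> [0..<s]"

definition phi :: real where "phi = (1 + sqrt 5) / 2"
definition omega :: real where "omega = 1 / phi"

text \<open>mu . F-hat = sum_{k\<ge>1} mu(k) omega^(k-1)\<close>
definition dotF :: "(nat \<Rightarrow> nat) \<Rightarrow> real" where
  "dotF \<mu> = (\<Sum>k. real (\<mu> k) * omega ^ k)"

definition LB_density :: "(nat \<Rightarrow> nat) \<Rightarrow> nat \<Rightarrow> nat list \<Rightarrow> nat \<Rightarrow> real" where
  "LB_density K s b n = real (card {k \<in> {1..n}. LB s (K k) = Some b}) / real n"

definition LB_cdf :: "(nat \<Rightarrow> nat) \<Rightarrow> (nat \<Rightarrow> nat) \<Rightarrow> nat \<Rightarrow> nat \<Rightarrow> real" where
  "LB_cdf K \<mu> s n =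
     real (card {k \<in> {1..n}. \<exists>c. LB s (K k) = Some c \<and> lex_le c (restr \<mu> s)}) / real n"

definition fKstar :: "(nat \<Rightarrow> nat) \<Rightarrow> real \<Rightarrow> real" where
  "fKstar K x = (if x = 0 then 0 else if x = 1 then 1 else
     (let \<mu> = (THE \<mu>. \<mu> \<in> Fstar \<and> \<mu> 0 = 1 \<and> phi * (dotF \<mu> - 1) = x)
      in lim (\<lambda>s. lim (LB_cdf K \<mu> s))))"

definition cont_LB_dist :: "(nat \<Rightarrow> nat) \<Rightarrow> bool" where
  "cont_LB_dist K \<longleftrightarrow>
     (\<forall>s\<ge>2. \<forall>b. zeck_valid b \<and> length b = s \<longrightarrow> convergent (LB_density K s b)) \<and>
     (\<forall>\<mu>\<in>Fstar. \<mu> 0 = 1 \<longrightarrow>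
        (\<forall>s. convergent (LB_cdf K \<mu> s)) \<and> convergent (\<lambda>s. lim (LB_cdf K \<mu> s))) \<and>
     continuous_on {0..1} (fKstar K) \<and> strict_mono_on {0..1} (fKstar K)"

definition unif_cont :: "(real \<Rightarrow> real) \<Rightarrow> (real \<Rightarrow> real) \<Rightarrow> bool" where
  "unif_cont f finf \<longleftrightarrow>
     continuous_on {1..} f \<and> strict_mono_on {1..} f \<and>
     (\<forall>n\<ge>1. f (real n) = real (FF n)) \<and>
     uniform_limit {0..1}
       (\<lambda>n p. (f (real n + p) - f (real n)) / (f (real n + 1) - f (real n))) finf sequentially \<and>
     continuous_on {0..1} finf \<and> strict_mono_on {0..1} finf"

definition equidistributed :: "(nat \<Rightarrow> real) \<Rightarrow> bool" where
  "equidistributed x \<longleftrightarrow>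
     (\<forall>\<beta>\<in>{0..1}. (\<lambda>n. real (card {k \<in> {1..n}. frac (x k) \<le> \<beta>}) / real n) \<longlonglongrightarrow> \<beta>)"

end

theory Submission
  imports Defs "HOL-Number_Theory.Fib"
begin


lemma FF_fib: "FF n = fib (Suc n)"
  by (induction n rule: FF.induct) auto

lemma FF_pos: "FF n > 0"
  by (simp add: FF_fib fib_neq_0_nat)

lemma FF_mono: "m \<le> n \<Longrightarrow> FF m \<le> FF n"
  by (simp add: FF_fib fib_mono)

lemma FF_rec: "1 \<le> M \<Longrightarrow> FF (Suc M) = FF M + FF (M - 1)"
  by (cases M) auto

lemma FF_strict: "1 \<le> m \<Longrightarrow> m < n \<Longrightarrow> FF m < FF n"
proof (induction n)
  case 0 then show ?case by simp
next
  case (Suc n)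
  have "FF (Suc n) = FF n + FF (n - 1)" using Suc.prems by (intro FF_rec) auto
  then have "FF n < FF (Suc n)" using FF_pos[of "n-1"] by simp
  then show ?case using Suc by (metis less_SucE less_trans)
qed

fun vl :: "nat list \<Rightarrow> nat" where
  "vl [] = 0"
| "vl (x # xs) = x * FF (Suc (length xs)) + vl xs"

fun na :: "nat list \<Rightarrow> bool" where
  "na [] = True"
| "na [x] = (x \<le> 1)"
| "na (x # y # r) = (x \<le> 1 \<and> (x = 0 \<or> y = 0) \<and> na (y # r))"

lemma zeck_val_vl: "zeck_val xs = vl xs"
proof (induction xs)
  case Nil then show ?case by (simp add: zeck_val_def)
next
  case (Cons x xs)
  have "zeck_val (x # xs) = (\<Sum>i<Suc (length xs). (x # xs) ! i * FF (Suc (length xs) - i))"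
    by (simp add: zeck_val_def)
  also have "\<dots> = x * FF (Suc (length xs)) + (\<Sum>i<length xs. xs ! i * FF (length xs - i))"
    by (subst sum.lessThan_Suc_shift) simp
  finally show ?case using Cons by (simp add: zeck_val_def)
qed

lemma na_tl: "na (x # xs) \<Longrightarrow> na xs"
  by (cases xs) auto

lemma na_conds: "na xs \<longleftrightarrow> set xs \<subseteq> {0, 1} \<and> (\<forall>i. Suc i < length xs \<longrightarrow> xs ! i * xs ! Suc i = 0)"
proof (induction xs rule: na.induct)
  case 1 then show ?case by simp
next
  case (2 x) then show ?case by auto
next
  case (3 x y r)
  have e: "(\<forall>i. Suc i < length (x # y # r) \<longrightarrow> (x # y # r) ! i * (x # y # r) ! Suc i = 0) \<longleftrightarrow>
      x * y = 0 \<and> (\<forall>i. Suc i < length (y # r) \<longrightarrow> (y # r) ! i * (y # r) ! Suc i = 0)"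
  proof
    assume a: "\<forall>i. Suc i < length (x # y # r) \<longrightarrow> (x # y # r) ! i * (x # y # r) ! Suc i = 0"
    show "x * y = 0 \<and> (\<forall>i. Suc i < length (y # r) \<longrightarrow> (y # r) ! i * (y # r) ! Suc i = 0)"
    proof
      show "x * y = 0" using a[rule_format, of 0] by simp
      show "\<forall>i. Suc i < length (y # r) \<longrightarrow> (y # r) ! i * (y # r) ! Suc i = 0"
        using a[rule_format, of "Suc _"] by simp
    qed
  next
    assume a: "x * y = 0 \<and> (\<forall>i. Suc i < length (y # r) \<longrightarrow> (y # r) ! i * (y # r) ! Suc i = 0)"
    show "\<forall>i. Suc i < length (x # y # r) \<longrightarrow> (x # y # r) ! i * (x # y # r) ! Suc i = 0"
    proof (intro allI impI)
      fix i assume "Suc i < length (x # y # r)"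
      then show "(x # y # r) ! i * (x # y # r) ! Suc i = 0"
        using a by (cases i) auto
    qed
  qed
  show ?case unfolding e using 3 by auto
qed

lemma zeck_valid_na: "zeck_valid xs \<longleftrightarrow> xs \<noteq> [] \<and> hd xs = 1 \<and> na xs"
  unfolding zeck_valid_def na_conds by auto

lemma na_bound: "na xs \<Longrightarrow> vl xs < FF (Suc (length xs))"
proof (induction "length xs" arbitrary: xs rule: less_induct)
  case less
  show ?case
  proof (cases xs rule: na.cases)
    case 1 then show ?thesis by simp
  next
    case (2 x) then show ?thesis using less by auto
  next
    case (3 x y r)
    have nyr: "na (y # r)" using less.prems 3 by simp
    have IH: "vl (y # r) < FF (Suc (length (y # r)))"
      by (rule less.hyps) (use 3 nyr in auto)
    show ?thesis
    proof (cases "x = 0")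
      case True
      then show ?thesis using IH FF_mono[of "Suc (length (y # r))" "Suc (length (x # y # r))"] 3 by simp
    next
      case False
      then have x1: "x = 1" and y0: "y = 0" using less 3 by auto
      have "na r" using less 3 by (auto intro: na_tl)
      then have "vl r < FF (Suc (length r))" using less 3 by auto
      then show ?thesis using x1 y0 3 by simp
    qed
  qed
qed


lemma vl_ge: "xs \<noteq> [] \<Longrightarrow> hd xs = 1 \<Longrightarrow> FF (length xs) \<le> vl xs"
  by (cases xs) auto

lemma vl_zeros: "vl (replicate n 0 @ xs) = vl xs"
  by (induction n) auto

lemma vl_append: "vl (xs @ ys) = vl (xs @ replicate (length ys) 0) + vl ys"
proof (induction xs)
  case Nil then show ?case using vl_zeros[of "length ys" "[]"] by simp
next
  case (Cons x xs) then show ?case by simp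
qed

lemma na_zeros: "na xs \<Longrightarrow> na (replicate n 0 @ xs)"
proof (induction n)
  case 0 then show ?case by simp
next
  case (Suc n)
  then show ?case by (cases "replicate n 0 @ xs") auto
qed

lemma na_one_zeros: "n \<ge> 1 \<Longrightarrow> na xs \<Longrightarrow> na (1 # replicate n 0 @ xs)"
  using na_zeros[of xs n] by (cases n) auto

lemma na_hd: "na (x # xs) \<Longrightarrow> x \<le> 1"
  by (cases xs) auto

lemma na_unique: "na xs \<Longrightarrow> na ys \<Longrightarrow> length xs = length ys \<Longrightarrow> vl xs = vl ys \<Longrightarrow> xs = ys"
proof (induction xs arbitrary: ys)
  case Nil then show ?case by simp
next
  case (Cons x xs)
  then obtain y ys' where ys: "ys = y # ys'" by (cases ys) auto
  have nx: "na xs" and ny: "na ys'" using Cons.prems ys by (auto intro: na_tl)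
  have x01: "x \<le> 1" using Cons.prems(1) by (rule na_hd)
  have y01: "y \<le> 1" using Cons.prems(2) ys na_hd by blast
  have len: "length xs = length ys'" using Cons.prems ys by simp
  have bx: "vl xs < FF (Suc (length xs))" using na_bound[OF nx] .
  have by': "vl ys' < FF (Suc (length xs))" using na_bound[OF ny] len by simp
  have "x = y"
  proof (rule ccontr)
    assume "x \<noteq> y"
    then have "(x = 1 \<and> y = 0) \<or> (x = 0 \<and> y = 1)" using x01 y01 by auto
    then show False
    proof
      assume a: "x = 1 \<and> y = 0"
      have "vl (x # xs) \<ge> FF (Suc (length xs))" using a by simp
      moreover have "vl (y # ys') = vl ys'" using a by simp
      ultimately show False using Cons.prems(4) ys by' a by simp
    next
      assume a: "x = 0 \<and> y = 1"
      have "vl (y # ys') \<ge> FF (Suc (length xs))" using a len by simp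
      moreover have "vl (x # xs) = vl xs" using a by simp
      ultimately show False using Cons.prems(4) ys bx a by simp
    qed
  qed
  then have "vl xs = vl ys'" using Cons.prems ys len by simp
  then show ?case using Cons.IH[OF nx ny len] \<open>x = y\<close> ys by simp
qed

lemma valid_bounds: "zeck_valid xs \<Longrightarrow> FF (length xs) \<le> vl xs \<and> vl xs < FF (Suc (length xs))"
  using vl_ge na_bound by (auto simp: zeck_valid_na)

lemma FF_bracket_unique:
  assumes "FF a \<le> v" "v < FF (Suc a)" "FF b \<le> v" "v < FF (Suc b)"
  shows "a = b"
proof (rule ccontr)
  assume "a \<noteq> b"
  then have "Suc a \<le> b \<or> Suc b \<le> a" by auto
  then show False
  proof
    assume "Suc a \<le> b" then have "FF (Suc a) \<le> FF b" by (rule FF_mono)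
    then show False using assms by simp
  next
    assume "Suc b \<le> a" then have "FF (Suc b) \<le> FF a" by (rule FF_mono)
    then show False using assms by simp
  qed
qed

lemma exists_M: "m \<ge> 1 \<Longrightarrow> \<exists>M\<ge>1. FF M \<le> m \<and> m < FF (Suc M)"
proof (induction m)
  case 0 then show ?case by simp
next
  case (Suc m)
  show ?case
  proof (cases "m = 0")
    case True then show ?thesis by (intro exI[of _ 1]) auto
  next
    case False
    then obtain M where M: "M \<ge> 1" "FF M \<le> m" "m < FF (Suc M)" using Suc by auto
    show ?thesis
    proof (cases "Suc m < FF (Suc M)")
      case True then show ?thesis using M by auto
    next
      case False
      then have e: "Suc m = FF (Suc M)" using M by auto
      have "FF (Suc (Suc M)) = FF (Suc M) + FF M" by simp
      then show ?thesis using e FF_pos[of M] by (intro exI[of _ "Suc M"]) auto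
    qed
  qed
qed

lemma zeck_exists: "m \<ge> 1 \<Longrightarrow> \<exists>xs. zeck_valid xs \<and> vl xs = m"
proof (induction m rule: less_induct)
  case (less m)
  obtain M where M: "M \<ge> 1" "FF M \<le> m" "m < FF (Suc M)" using exists_M less.prems by auto
  define r where "r = m - FF M"
  have rlt: "r < FF (M - 1)" using M FF_rec[OF M(1)] r_def by simp
  show ?case
  proof (cases "r = 0")
    case True
    define xs :: "nat list" where "xs = 1 # replicate (M - 1) 0 @ []"
    have "na xs" unfolding xs_def using na_zeros[of "[]" "M-1"] by (cases "M - 1") auto
    moreover have "vl xs = m" using True r_def M vl_zeros[of "M-1" "[]"] by (simp add: xs_def)
    ultimately show ?thesis by (auto simp: zeck_valid_na xs_def)
  next
    case False
    have "r < m" using r_def FF_pos[of M] False by simp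
    then obtain ys where ys: "zeck_valid ys" "vl ys = r" using less.IH[of r] False by auto
    have "FF (length ys) \<le> r" using valid_bounds[OF ys(1)] ys(2) by simp
    then have "length ys < M - 1"
      using rlt FF_mono[of "M - 1" "length ys"] by (cases "length ys < M - 1") auto
    define xs :: "nat list" where "xs = 1 # replicate (M - 1 - length ys) 0 @ ys"
    have "na xs" unfolding xs_def using ys(1) \<open>length ys < M - 1\<close>
      by (intro na_one_zeros) (auto simp: zeck_valid_na)
    moreover have "length xs = M" using \<open>length ys < M - 1\<close> by (simp add: xs_def)
    moreover have "vl xs = m" using ys r_def M vl_zeros \<open>length ys < M - 1\<close>
      by (simp add: xs_def)
    ultimately show ?thesis by (auto simp: zeck_valid_na xs_def)
  qed
qed

lemma zeck_props: "m \<ge> 1 \<Longrightarrow> zeck_valid (zeck m) \<and> vl (zeck m) = m"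
proof -
  assume m: "m \<ge> 1"
  obtain xs where xs: "zeck_valid xs" "vl xs = m" using zeck_exists[OF m] by auto
  have u: "ys = xs" if "zeck_valid ys \<and> zeck_val ys = m" for ys
  proof -
    have v: "zeck_valid ys" "vl ys = m" using that by (auto simp: zeck_val_vl)
    have b1: "FF (length ys) \<le> m" "m < FF (Suc (length ys))" using valid_bounds[OF v(1)] v(2) by auto
    have b2: "FF (length xs) \<le> m" "m < FF (Suc (length xs))" using valid_bounds[OF xs(1)] xs(2) by auto
    have "length ys = length xs" using FF_bracket_unique[OF b1 b2] .
    moreover have "na ys" "na xs" using v(1) xs(1) by (auto simp: zeck_valid_na)
    ultimately show ?thesis using na_unique v xs by metis
  qed
  have xs': "zeck_valid xs \<and> zeck_val xs = m" using xs by (simp add: zeck_val_vl)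
  have "zeck m = xs" unfolding zeck_def
    by (rule the_equality[where P="\<lambda>ys. zeck_valid ys \<and> zeck_val ys = m", OF xs' u])
  then show ?thesis using xs by simp
qed



lemma lex_vl: "na u \<Longrightarrow> na v \<Longrightarrow> length u = length v \<Longrightarrow> (u, v) \<in> lexord {(a, b). a < b} \<Longrightarrow> vl u < vl v"
proof (induction u arbitrary: v)
  case Nil then show ?case by simp
next
  case (Cons x u)
  then obtain y v' where v: "v = y # v'" by (cases v) auto
  have nu: "na u" and nv: "na v'" using Cons.prems v by (auto intro: na_tl)
  have len: "length u = length v'" using Cons.prems v by simp
  have y1: "y \<le> 1" using Cons.prems(2) v na_hd by blast
  from Cons.prems(4) v have "x < y \<or> x = y \<and> (u, v') \<in> lexord {(a, b). a < b}" by simp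
  then show ?case
  proof
    assume "x < y"
    then have "x = 0" "y = 1" using y1 by auto
    then show ?thesis using na_bound[OF nu] len v by simp
  next
    assume a: "x = y \<and> (u, v') \<in> lexord {(a, b). a < b}"
    then show ?thesis using Cons.IH[OF nu nv len] v len by simp
  qed
qed

lemma na_snoc0: "na xs \<Longrightarrow> na (xs @ [0])"
proof (induction xs rule: na.induct)
  case 1 then show ?case by simp
next
  case (2 x) then show ?case by simp
next
  case (3 x y r) then show ?case by simp
qed

lemma na_app_zeros: "na xs \<Longrightarrow> na (xs @ replicate n 0)"
proof (induction n arbitrary: xs)
  case 0 then show ?case by simp
next
  case (Suc n)
  have "xs @ replicate (Suc n) 0 = (xs @ [0]) @ replicate n 0" by simp
  then show ?case using Suc.IH[OF na_snoc0[OF Suc.prems]] by simp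
qed

lemma na_drop: "na xs \<Longrightarrow> na (drop n xs)"
proof (induction n arbitrary: xs)
  case 0 then show ?case by simp
next
  case (Suc n) then show ?case by (cases xs) (auto intro: na_tl)
qed

lemma lexI_app: "(u, w) \<in> lexord r \<Longrightarrow> length u = length w \<Longrightarrow> (u @ v, w @ z) \<in> lexord r"
  by (rule lexord_sufI) auto

lemma key_ge:
  assumes "na d" "na c" "length c = s" "s \<le> length d"
    and "(c, take s d) \<in> lexord {(a, b). a < b}"
  shows "vl (c @ replicate (length d - s) 0) < vl d"
proof -
  have "(c @ replicate (length d - s) 0, take s d @ drop s d) \<in> lexord {(a, b). a < b}"
    using assms by (intro lexI_app) auto
  then show ?thesis using assms
    by (intro lex_vl) (auto intro: na_app_zeros)
qed

lemma key_le:
  assumes "na d" "na c" "length c = s" "s \<le> length d"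
    and "lex_le (take s d) c"
  shows "vl d < vl (c @ replicate (length d - s) 0) + FF (Suc (length d - s))"
proof (cases "take s d = c")
  case True
  have d: "d = c @ drop s d" using True by (metis append_take_drop_id)
  have "vl d = vl (c @ replicate (length (drop s d)) 0) + vl (drop s d)"
    by (subst d) (rule vl_append)
  moreover have "vl (drop s d) < FF (Suc (length d - s))"
    using na_bound[OF na_drop[OF assms(1)]] by simp
  ultimately show ?thesis by simp
next
  case False
  then have l: "(take s d, c) \<in> lexord {(a, b). a < b}" using assms(5) by (auto simp: lex_le_def)
  have "(take s d @ drop s d, c @ replicate (length d - s) 0) \<in> lexord {(a, b). a < b}"
    using l assms by (intro lexI_app) auto
  then have "vl d < vl (c @ replicate (length d - s) 0)" using assms
    by (intro lex_vl) (auto intro: na_app_zeros)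
  then show ?thesis by simp
qed

lemma lex_total: "length u = length v \<Longrightarrow> \<not> lex_le u v \<Longrightarrow> (v, u) \<in> lexord {(a, b). a < b}"
proof -
  have "\<forall>a b. (a, b) \<in> {(a, b). (a::nat) < b} \<or> a = b \<or> (b, a) \<in> {(a, b). (a::nat) < b}" by auto
  from lexord_linear[OF this, of u v] show "length u = length v \<Longrightarrow> \<not> lex_le u v \<Longrightarrow> (v, u) \<in> lexord {(a, b). a < b}"
    by (auto simp: lex_le_def)
qed

definition restr_na :: "(nat \<Rightarrow> nat) \<Rightarrow> bool" where
  "restr_na \<mu> \<longleftrightarrow> (\<forall>k. \<mu> k \<in> {0, 1}) \<and> (\<forall>k. \<mu> k * \<mu> (Suc k) = 0)"

lemma na_restr: "(\<forall>k. \<mu> k \<in> {0, 1}) \<Longrightarrow> (\<forall>k. \<mu> k * \<mu> (Suc k) = 0) \<Longrightarrow> na (restr \<mu> s)"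
proof -
  assume a1: "\<forall>k. \<mu> k \<in> {0, 1}" and a2: "\<forall>k. \<mu> k * \<mu> (Suc k) = 0"
  have "set (restr \<mu> s) \<subseteq> {0, 1}" unfolding restr_def using a1 by (simp add: image_subset_iff)
  moreover have "\<forall>i. Suc i < length (restr \<mu> s) \<longrightarrow> restr \<mu> s ! i * restr \<mu> s ! Suc i = 0"
    using a2 by (simp add: restr_def)
  ultimately show ?thesis unfolding na_conds by blast
qed

lemma vl_restr_zeros:
  assumes "s \<le> M"
  shows "vl (restr \<mu> s @ replicate (M - s) 0) = (\<Sum>i<s. \<mu> i * FF (M - i))"
proof -
  have "vl (restr \<mu> s @ replicate (M - s) 0) = zeck_val (restr \<mu> s @ replicate (M - s) 0)"
    by (simp add: zeck_val_vl)
  also have "\<dots> = (\<Sum>i<M. (restr \<mu> s @ replicate (M - s) 0) ! i * FF (M - i))"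
    using assms by (simp add: zeck_val_def restr_def)
  also have "\<dots> = (\<Sum>i<M. (if i < s then \<mu> i * FF (M - i) else 0))"
    by (intro sum.cong) (auto simp: restr_def nth_append)
  also have "\<dots> = (\<Sum>i<s. \<mu> i * FF (M - i))"
  proof -
    have "{i \<in> {..<M}. i < s} = {..<s}" using assms by auto
    then show ?thesis using sum.inter_filter[of "{..<M}" "\<lambda>i. \<mu> i * FF (M - i)" "\<lambda>i. i < s"] by simp
  qed
  finally show ?thesis .
qed



lemma sqrt5_sq: "sqrt 5 * sqrt 5 = (5::real)" by simp

lemma phi_gt1: "phi > 1" unfolding phi_def
proof -
  have "sqrt 5 > (1::real)" by simp
  then show "(1 + sqrt 5) / 2 > (1::real)" by simp
qed

lemma phi_lt2: "phi < 2" unfolding phi_def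
proof -
  have "sqrt 5 < sqrt (9::real)" by (rule real_sqrt_less_mono) simp
  moreover have "sqrt (9::real) = 3" using real_sqrt_abs[of "3::real"] by simp
  ultimately have "sqrt 5 < (3::real)" by linarith
  then show "(1 + sqrt 5) / 2 < (2::real)" by simp
qed

lemma phi_sq: "phi * phi = phi + 1"
  unfolding phi_def by (simp add: field_simps sqrt5_sq)

lemma omega_pos: "omega > 0" using phi_gt1 by (simp add: omega_def)
lemma omega_lt1: "omega < 1" using phi_gt1 by (simp add: omega_def)
lemma phi_omega: "phi * omega = 1" using phi_gt1 by (simp add: omega_def)
lemma omega_eq: "omega + omega ^ 2 = 1"
proof -
  have "phi \<noteq> 0" using phi_gt1 by simp
  have "omega + omega ^ 2 = (phi + 1) / (phi * phi)" using \<open>phi \<noteq> 0\<close>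
    by (simp add: omega_def field_simps power2_eq_square)
  then show ?thesis using phi_sq \<open>phi \<noteq> 0\<close> phi_gt1 by simp
qed
lemma two_omega: "2 * omega > 1" using phi_lt2 phi_gt1 by (simp add: omega_def field_simps)

lemma FF_ratio0: "(\<lambda>n. real (FF n) / real (FF (n + j))) \<longlonglongrightarrow> omega ^ j"
proof -
  define \<phi>' :: real where "\<phi>' = (1 + sqrt 5) / 2"
  have ph: "\<phi>' = phi" by (simp add: phi_def \<phi>'_def)
  define a where "a n = real (fib n) / (\<phi>' ^ n / sqrt 5)" for n
  have a1: "a \<longlonglongrightarrow> 1" unfolding a_def \<phi>'_def by (rule fib_asymptotics)
  have a2: "(\<lambda>n. a (n + 1)) \<longlonglongrightarrow> 1" by (rule LIMSEQ_ignore_initial_segment[OF a1])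
  have a3: "(\<lambda>n. a (n + 1 + j)) \<longlonglongrightarrow> 1"
    using LIMSEQ_ignore_initial_segment[OF a1, of "1 + j"] by (simp add: add.assoc)
  have lim: "(\<lambda>n. a (n + 1) / a (n + 1 + j) * omega ^ j) \<longlonglongrightarrow> 1 / 1 * omega ^ j"
    by (intro tendsto_intros a2 a3) simp
  have pos: "\<phi>' > 0" using phi_gt1 ph by simp
  have eq: "real (FF n) / real (FF (n + j)) = a (n + 1) / a (n + 1 + j) * omega ^ j" for n
  proof -
    have f1: "real (fib k) = a k * (\<phi>' ^ k / sqrt 5)" for k
      using pos by (simp add: a_def)
    have e1: "real (FF n) = a (n + 1) * (\<phi>' ^ (n + 1) / sqrt 5)" using f1[of "n+1"] by (simp add: FF_fib)
    have e2: "real (FF (n + j)) = a (n + 1 + j) * (\<phi>' ^ (n + 1 + j) / sqrt 5)" using f1[of "n+1+j"] by (simp add: FF_fib)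
    have "real (FF n) / real (FF (n + j)) = (a (n + 1) * (\<phi>' ^ (n + 1) / sqrt 5)) / (a (n + 1 + j) * (\<phi>' ^ (n + 1 + j) / sqrt 5))"
      by (simp only: e1 e2)
    also have "\<dots> = a (n + 1) / a (n + 1 + j) * (\<phi>' ^ (n + 1) / \<phi>' ^ (n + 1 + j))"
      using pos by (simp add: field_simps)
    also have "\<phi>' ^ (n + 1) / \<phi>' ^ (n + 1 + j) = omega ^ j"
      using pos by (simp add: power_add omega_def ph field_simps)
    finally show ?thesis .
  qed
  show ?thesis using lim by (simp add: eq)
qed

lemma FF_ratio: "(\<lambda>n. real (FF (n + a)) / real (FF (n + a + j))) \<longlonglongrightarrow> omega ^ j"
  using LIMSEQ_ignore_initial_segment[OF FF_ratio0[of j], of a] by simp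

lemma FF_ratio_i: "(\<lambda>M. real (FF (M - Suc i)) / real (FF (M - 1))) \<longlonglongrightarrow> omega ^ i"
proof (rule LIMSEQ_offset[where k = "Suc i"])
  have "(\<lambda>n. real (FF (n + 0)) / real (FF (n + 0 + i))) \<longlonglongrightarrow> omega ^ i" by (rule FF_ratio)
  moreover have "n + Suc i - 1 = n + 0 + i" for n by simp
  ultimately show "(\<lambda>n. real (FF (n + Suc i - Suc i)) / real (FF (n + Suc i - 1))) \<longlonglongrightarrow> omega ^ i"
    by simp
qed

lemma FF_ratio_bnd: "s' \<ge> 1 \<Longrightarrow> (\<lambda>M. real (FF (Suc (M - Suc s'))) / real (FF (M - 1))) \<longlonglongrightarrow> omega ^ (s' - 1)"
proof (rule LIMSEQ_offset[where k = "Suc s'"])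
  assume "s' \<ge> 1"
  have "(\<lambda>n. real (FF (n + 1)) / real (FF (n + 1 + (s' - 1)))) \<longlonglongrightarrow> omega ^ (s' - 1)" by (rule FF_ratio)
  moreover have "n + Suc s' - 1 = n + 1 + (s' - 1)" for n using \<open>s' \<ge> 1\<close> by simp
  ultimately show "(\<lambda>n. real (FF (Suc (n + Suc s' - Suc s'))) / real (FF (n + Suc s' - 1))) \<longlonglongrightarrow> omega ^ (s' - 1)"
    by simp
qed

definition Aq :: "(nat \<Rightarrow> nat) \<Rightarrow> nat \<Rightarrow> nat \<Rightarrow> real" where
  "Aq \<mu> s' M = (\<Sum>i<s'. real (\<mu> (Suc i)) * (real (FF (M - Suc i)) / real (FF (M - 1))))"

definition Pq :: "(nat \<Rightarrow> nat) \<Rightarrow> nat \<Rightarrow> real" where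
  "Pq \<mu> s' = (\<Sum>i<s'. real (\<mu> (Suc i)) * omega ^ i)"

lemma Aq_lim: "(\<lambda>M. Aq \<mu> s' M) \<longlonglongrightarrow> Pq \<mu> s'"
  unfolding Aq_def Pq_def by (intro tendsto_sum tendsto_mult tendsto_const FF_ratio_i)

definition rK :: "nat \<Rightarrow> real" where
  "rK K = (real K - real (FF (length (zeck K)))) / real (FF (length (zeck K) - 1))"

lemma zeck_len_ge1: "K \<ge> 1 \<Longrightarrow> length (zeck K) \<ge> 1"
  using zeck_props[of K] by (cases "zeck K") (auto simp: zeck_valid_na)

lemma zeck_bounds: "K \<ge> 1 \<Longrightarrow> FF (length (zeck K)) \<le> K \<and> K < FF (Suc (length (zeck K)))"
proof -
  assume K: "K \<ge> 1"
  have "zeck_valid (zeck K)" "vl (zeck K) = K" using zeck_props[OF K] by auto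
  then show ?thesis using valid_bounds[of "zeck K"] by simp
qed

lemma rK_range: "K \<ge> 1 \<Longrightarrow> 0 \<le> rK K \<and> rK K < 1"
proof -
  assume K: "K \<ge> 1"
  define M where "M = length (zeck K)"
  have M1: "M \<ge> 1" using zeck_len_ge1[OF K] M_def by simp
  have b: "FF M \<le> K" "K < FF M + FF (M - 1)" using zeck_bounds[OF K] FF_rec[OF M1] M_def by auto
  have p: "real (FF (M - 1)) > 0" using FF_pos by simp
  have "real K - real (FF M) < real (FF (M - 1))" using b by linarith
  then show ?thesis using b p unfolding rK_def M_def[symmetric] by (simp add: field_simps)
qed

lemma sum_split0: "(\<Sum>i<Suc s'. \<mu> i * FF (M - i)) = \<mu> 0 * FF M + (\<Sum>i<s'. \<mu> (Suc i) * FF (M - Suc i))"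
  by (subst sum.lessThan_Suc_shift) simp

lemma Aq_eq: "real (\<Sum>i<s'. \<mu> (Suc i) * FF (M - Suc i)) / real (FF (M - 1)) = Aq \<mu> s' M"
  unfolding Aq_def by (simp add: sum_divide_distrib)

lemma rK_gt:
  assumes K: "K \<ge> 1" and mu: "\<forall>k. \<mu> k \<in> {0, 1}" "\<forall>k. \<mu> k * \<mu> (Suc k) = 0" "\<mu> 0 = 1"
    and s: "Suc s' \<le> length (zeck K)"
    and nl: "\<not> lex_le (take (Suc s') (zeck K)) (restr \<mu> (Suc s'))"
  shows "rK K > Aq \<mu> s' (length (zeck K))"
proof -
  define d where "d = zeck K"
  define M where "M = length d"
  have nd: "na d" using zeck_props[OF K] by (simp add: d_def zeck_valid_na)
  have nc: "na (restr \<mu> (Suc s'))" using na_restr mu by blast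
  have l: "(restr \<mu> (Suc s'), take (Suc s') d) \<in> lexord {(a, b). a < b}"
    using lex_total[of "take (Suc s') d" "restr \<mu> (Suc s')"] nl s by (simp add: d_def restr_def)
  have "vl (restr \<mu> (Suc s') @ replicate (M - Suc s') 0) < vl d"
    using key_ge[OF nd nc _ _ l] s by (simp add: d_def M_def restr_def)
  then have "(\<Sum>i<Suc s'. \<mu> i * FF (M - i)) < K"
    using vl_restr_zeros[of "Suc s'" M \<mu>] s zeck_props[OF K] by (simp add: d_def M_def)
  moreover have e: "(\<Sum>i<Suc s'. \<mu> i * FF (M - i)) = FF M + (\<Sum>i<s'. \<mu> (Suc i) * FF (M - Suc i))"
    by (simp only: sum_split0 mu(3) mult_1)
  ultimately have "FF M + (\<Sum>i<s'. \<mu> (Suc i) * FF (M - Suc i)) < K" by simp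
  then have "real (\<Sum>i<s'. \<mu> (Suc i) * FF (M - Suc i)) < real K - real (FF M)" by linarith
  then have "real (\<Sum>i<s'. \<mu> (Suc i) * FF (M - Suc i)) / real (FF (M - 1)) < (real K - real (FF M)) / real (FF (M - 1))"
    using FF_pos by (intro divide_strict_right_mono) auto
  then show ?thesis unfolding Aq_eq rK_def by (simp add: M_def d_def)
qed

lemma rK_lt:
  assumes K: "K \<ge> 1" and mu: "\<forall>k. \<mu> k \<in> {0, 1}" "\<forall>k. \<mu> k * \<mu> (Suc k) = 0" "\<mu> 0 = 1"
    and s: "Suc s' \<le> length (zeck K)"
    and ll: "lex_le (take (Suc s') (zeck K)) (restr \<mu> (Suc s'))"
  shows "rK K < Aq \<mu> s' (length (zeck K)) + real (FF (Suc (length (zeck K) - Suc s'))) / real (FF (length (zeck K) - 1))"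
proof -
  define d where "d = zeck K"
  define M where "M = length d"
  have nd: "na d" using zeck_props[OF K] by (simp add: d_def zeck_valid_na)
  have nc: "na (restr \<mu> (Suc s'))" using na_restr mu by blast
  have "vl d < vl (restr \<mu> (Suc s') @ replicate (M - Suc s') 0) + FF (Suc (M - Suc s'))"
    using key_le[OF nd nc _ _ ll[folded d_def]] s by (simp add: d_def M_def restr_def)
  then have "K < (\<Sum>i<Suc s'. \<mu> i * FF (M - i)) + FF (Suc (M - Suc s'))"
    using vl_restr_zeros[of "Suc s'" M \<mu>] s zeck_props[OF K] by (simp add: d_def M_def)
  moreover have e: "(\<Sum>i<Suc s'. \<mu> i * FF (M - i)) = FF M + (\<Sum>i<s'. \<mu> (Suc i) * FF (M - Suc i))"
    by (simp only: sum_split0 mu(3) mult_1)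
  ultimately have "K < FF M + (\<Sum>i<s'. \<mu> (Suc i) * FF (M - Suc i)) + FF (Suc (M - Suc s'))" by simp
  then have "real K - real (FF M) < real (\<Sum>i<s'. \<mu> (Suc i) * FF (M - Suc i)) + real (FF (Suc (M - Suc s')))" by linarith
  then have "(real K - real (FF M)) / real (FF (M - 1)) < (real (\<Sum>i<s'. \<mu> (Suc i) * FF (M - Suc i)) + real (FF (Suc (M - Suc s')))) / real (FF (M - 1))"
    using FF_pos by (intro divide_strict_right_mono) auto
  then have "(real K - real (FF M)) / real (FF (M - 1)) < Aq \<mu> s' M + real (FF (Suc (M - Suc s'))) / real (FF (M - 1))"
    unfolding add_divide_distrib Aq_eq .
  then show ?thesis unfolding rK_def M_def d_def .
qed



definition bin :: "(nat \<Rightarrow> nat) \<Rightarrow> bool" where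
  "bin b \<longleftrightarrow> (\<forall>k. b k \<le> 1) \<and> (\<forall>k. b k * b (Suc k) = 0)"

lemma bin_shift: "bin b \<Longrightarrow> bin (\<lambda>k. b (m + k))"
  unfolding bin_def by simp

lemma Fstar_bin: "\<mu> \<in> Fstar \<Longrightarrow> bin \<mu>"
proof -
  assume "\<mu> \<in> Fstar"
  then have a: "\<forall>k. \<mu> k \<in> {0, 1}" "\<forall>k. \<mu> k * \<mu> (Suc k) = 0" by (auto simp: Fstar_def)
  have "\<mu> k \<le> 1" for k using a(1)[rule_format, of k] by auto
  then show ?thesis using a(2) by (simp add: bin_def)
qed

lemma summ_bin: "bin b \<Longrightarrow> summable (\<lambda>k. real (b k) * omega ^ k)"
proof (rule summable_comparison_test')
  show "summable (\<lambda>k. omega ^ k)" using omega_pos omega_lt1 by (intro summable_geometric) simp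
  fix n assume "bin b"
  then have "b n \<le> 1" by (simp add: bin_def)
  then show "norm (real (b n) * omega ^ n) \<le> omega ^ n" using omega_pos
    by (simp add: abs_mult mult_le_cancel_right1)
qed

lemma fin_bound: "bin b \<Longrightarrow> (\<Sum>k<n. real (b k) * omega ^ k) \<le> phi"
proof (induction n arbitrary: b rule: less_induct)
  case (less n)
  show ?case
  proof (cases n)
    case 0 then show ?thesis using phi_gt1 by simp
  next
    case (Suc n1)
    have b01: "b 0 \<le> 1" "b 0 * b 1 = 0" using less.prems by (auto simp: bin_def)
    have eq1: "(\<Sum>k<n. real (b k) * omega ^ k) = real (b 0) + omega * (\<Sum>k<n1. real (b (1 + k)) * omega ^ k)"
      unfolding Suc by (subst sum.lessThan_Suc_shift) (simp add: sum_distrib_left mult_ac)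
    show ?thesis
    proof (cases "b 0 = 0")
      case True
      have "(\<Sum>k<n1. real (b (1 + k)) * omega ^ k) \<le> phi"
        using less.IH[of n1 "\<lambda>k. b (1 + k)"] Suc bin_shift[OF less.prems, of 1] by simp
      then have "omega * (\<Sum>k<n1. real (b (1 + k)) * omega ^ k) \<le> omega * phi"
        using omega_pos by (intro mult_left_mono) auto
      then show ?thesis using eq1 True phi_omega phi_gt1 by (simp add: mult.commute)
    next
      case False
      then have b0: "b 0 = 1" "b 1 = 0" using b01 by auto
      show ?thesis
      proof (cases n1)
        case 0 then show ?thesis using eq1 b0 phi_gt1 by simp
      next
        case (Suc n2)
        have eq2: "(\<Sum>k<n1. real (b (1 + k)) * omega ^ k) = real (b 1) + omega * (\<Sum>k<n2. real (b (2 + k)) * omega ^ k)"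
          unfolding Suc by (subst sum.lessThan_Suc_shift) (simp add: sum_distrib_left mult_ac)
        have "(\<Sum>k<n2. real (b (2 + k)) * omega ^ k) \<le> phi"
          using less.IH[of n2 "\<lambda>k. b (2 + k)"] Suc \<open>n = Suc n1\<close> bin_shift[OF less.prems, of 2] by simp
        define S2 where "S2 = (\<Sum>k<n2. real (b (2 + k)) * omega ^ k)"
        define S1 where "S1 = (\<Sum>k<n1. real (b (1 + k)) * omega ^ k)"
        have "S2 \<le> phi" using \<open>(\<Sum>k<n2. real (b (2 + k)) * omega ^ k) \<le> phi\<close> S2_def by simp
        then have "omega * S2 \<le> omega * phi" using omega_pos by (intro mult_left_mono) auto
        then have m: "omega * (omega * S2) \<le> omega * (omega * phi)" using omega_pos by (intro mult_left_mono) auto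
        have w: "omega * (omega * phi) = omega" using phi_omega by (simp add: mult_ac)
        have e1: "(\<Sum>k<n. real (b k) * omega ^ k) = 1 + omega * S1" using eq1 b0 S1_def by simp
        have e2: "S1 = omega * S2" using eq2 b0 S1_def S2_def by simp
        have "1 + omega = phi" using omega_eq phi_omega phi_sq phi_gt1
          by (simp add: omega_def field_simps)
        then show ?thesis using e1 e2 m w by simp
      qed
    qed
  qed
qed

lemma inf_bound: "bin b \<Longrightarrow> (\<Sum>k. real (b k) * omega ^ k) \<le> phi"
  by (rule suminf_le_const[OF summ_bin]) (auto intro: fin_bound)

lemma geo2: "(\<Sum>i<n. omega ^ (2 * i)) = phi * (1 - omega ^ (2 * n))"
proof (induction n)
  case 0 then show ?case by simp
next
  case (Suc n)
  have "(\<Sum>i<Suc n. omega ^ (2 * i)) = phi * (1 - omega ^ (2 * n)) + omega ^ (2 * n)"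
    using Suc by simp
  also have "\<dots> = phi - omega ^ (2 * n) * (phi - 1)" by (simp add: algebra_simps)
  also have "phi - 1 = omega" using omega_eq phi_omega phi_sq phi_gt1 by (simp add: omega_def field_simps)
  also have "phi - omega ^ (2 * n) * omega = phi * (1 - omega ^ (2 * Suc n))"
    using phi_omega by (simp add: algebra_simps power_add mult_2 power2_eq_square)
  finally show ?case .
qed

lemma prefix_alt:
  assumes "\<forall>i'<i. b (2 * i') = 1 \<and> b (2 * i' + 1) = 0"
  shows "(\<Sum>k<2 * i. real (b k) * omega ^ k) = (\<Sum>i'<i. omega ^ (2 * i'))"
  using assms
proof (induction i)
  case 0 then show ?case by simp
next
  case (Suc i)
  have "(\<Sum>k<2 * Suc i. real (b k) * omega ^ k) = (\<Sum>k<2 * i. real (b k) * omega ^ k) + real (b (2 * i)) * omega ^ (2 * i) + real (b (2 * i + 1)) * omega ^ (2 * i + 1)"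
    by simp
  then show ?case using Suc by simp
qed

lemma strict_bound:
  assumes b: "bin b" and na: "\<not> (\<forall>i. b (2 * i) = 1 \<and> b (2 * i + 1) = 0)"
  shows "(\<Sum>k. real (b k) * omega ^ k) < phi"
proof -
  define i where "i = (LEAST i. \<not> (b (2 * i) = 1 \<and> b (2 * i + 1) = 0))"
  have ni: "\<not> (b (2 * i) = 1 \<and> b (2 * i + 1) = 0)" using na unfolding i_def by (metis (mono_tags, lifting) LeastI)
  have lt: "\<forall>i'<i. b (2 * i') = 1 \<and> b (2 * i' + 1) = 0" unfolding i_def using not_less_Least by blast
  have bi: "b (2 * i) = 0"
  proof -
    have "b (2 * i) \<le> 1" "b (2 * i) * b (Suc (2 * i)) = 0" using b by (auto simp: bin_def)
    then show ?thesis using ni by auto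
  qed
  have s: "summable (\<lambda>k. real (b k) * omega ^ k)" by (rule summ_bin[OF b])
  have split: "(\<Sum>k. real (b k) * omega ^ k) = (\<Sum>k. real (b (k + (2 * i + 1))) * omega ^ (k + (2 * i + 1))) + (\<Sum>k<2 * i + 1. real (b k) * omega ^ k)"
    by (rule suminf_split_initial_segment[OF s])
  have "(\<Sum>k. real (b (k + (2 * i + 1))) * omega ^ (k + (2 * i + 1))) = (\<Sum>k. omega ^ (2 * i + 1) * (real (b ((2 * i + 1) + k)) * omega ^ k))"
    by (simp add: power_add mult_ac add.commute)
  also have "\<dots> = omega ^ (2 * i + 1) * (\<Sum>k. real (b ((2 * i + 1) + k)) * omega ^ k)"
    by (rule suminf_mult[OF summ_bin[OF bin_shift[OF b]]])
  also have "\<dots> \<le> omega ^ (2 * i + 1) * phi"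
    using inf_bound[OF bin_shift[OF b, of "2 * i + 1"]] omega_pos by (intro mult_left_mono) auto
  also have "\<dots> = omega ^ (2 * i)" using phi_omega by (simp add: mult_ac)
  finally have t: "(\<Sum>k. real (b (k + (2 * i + 1))) * omega ^ (k + (2 * i + 1))) \<le> omega ^ (2 * i)" .
  have p: "(\<Sum>k<2 * i + 1. real (b k) * omega ^ k) = (\<Sum>i'<i. omega ^ (2 * i'))"
    using prefix_alt[OF lt] bi by simp
  have "(\<Sum>k. real (b k) * omega ^ k) \<le> (\<Sum>i'<i. omega ^ (2 * i')) + omega ^ (2 * i)"
    using split t p by linarith
  also have "\<dots> = (\<Sum>i'<Suc i. omega ^ (2 * i'))" by simp
  also have "\<dots> = phi * (1 - omega ^ (2 * Suc i))" by (rule geo2)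
  also have "\<dots> < phi" using phi_gt1 omega_pos by simp
  finally show ?thesis .
qed



lemma dotF_less:
  assumes nu: "\<nu> \<in> Fstar" and mu: "bin \<mu>" and j: "\<mu> j = 1" "\<nu> j = 0" and pre: "\<forall>k<j. \<mu> k = \<nu> k"
  shows "dotF \<nu> < dotF \<mu>"
proof -
  have bn: "bin \<nu>" using Fstar_bin[OF nu] .
  define C where "C = (\<Sum>k<j. real (\<nu> k) * omega ^ k)"
  have sn: "summable (\<lambda>k. real (\<nu> k) * omega ^ k)" by (rule summ_bin[OF bn])
  have sm: "summable (\<lambda>k. real (\<mu> k) * omega ^ k)" by (rule summ_bin[OF mu])
  have nalt: "\<not> (\<forall>i. \<nu> (Suc j + 2 * i) = 1 \<and> \<nu> (Suc j + 2 * i + 1) = 0)"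
    using nu unfolding Fstar_def by blast
  have T: "(\<Sum>k. real (\<nu> (Suc j + k)) * omega ^ k) < phi"
    using strict_bound[OF bin_shift[OF bn, of "Suc j"]] nalt by simp
  have "dotF \<nu> = (\<Sum>k. real (\<nu> (k + Suc j)) * omega ^ (k + Suc j)) + (\<Sum>k<Suc j. real (\<nu> k) * omega ^ k)"
    unfolding dotF_def by (rule suminf_split_initial_segment[OF sn])
  also have "(\<Sum>k<Suc j. real (\<nu> k) * omega ^ k) = C" using j by (simp add: C_def)
  also have "(\<Sum>k. real (\<nu> (k + Suc j)) * omega ^ (k + Suc j)) = (\<Sum>k. omega ^ Suc j * (real (\<nu> (Suc j + k)) * omega ^ k))"
    by (simp add: power_add mult_ac add.commute)
  also have "\<dots> = omega ^ Suc j * (\<Sum>k. real (\<nu> (Suc j + k)) * omega ^ k)"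
    by (rule suminf_mult[OF summ_bin[OF bin_shift[OF bn, of "Suc j"]]])
  also have "\<dots> < omega ^ Suc j * phi" using T omega_pos by (intro mult_strict_left_mono) auto
  also have "omega ^ Suc j * phi = omega ^ j" using phi_omega by (simp add: mult_ac)
  finally have a: "dotF \<nu> < omega ^ j + C" by simp
  have "dotF \<mu> = (\<Sum>k. real (\<mu> (k + Suc j)) * omega ^ (k + Suc j)) + (\<Sum>k<Suc j. real (\<mu> k) * omega ^ k)"
    unfolding dotF_def by (rule suminf_split_initial_segment[OF sm])
  also have "(\<Sum>k<Suc j. real (\<mu> k) * omega ^ k) = C + omega ^ j" using j pre by (simp add: C_def)
  finally have b: "dotF \<mu> = (\<Sum>k. real (\<mu> (k + Suc j)) * omega ^ (k + Suc j)) + (C + omega ^ j)" .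
  have "(\<Sum>k. real (\<mu> (k + Suc j)) * omega ^ (k + Suc j)) \<ge> 0"
    using summable_ignore_initial_segment[OF sm, of "Suc j"] omega_pos by (intro suminf_nonneg) auto
  then show ?thesis using a b by linarith
qed

lemma dotF_inj:
  assumes "\<mu> \<in> Fstar" "\<nu> \<in> Fstar" "dotF \<mu> = dotF \<nu>"
  shows "\<mu> = \<nu>"
proof (rule ccontr)
  assume "\<mu> \<noteq> \<nu>"
  then have ex: "\<exists>k. \<mu> k \<noteq> \<nu> k" by auto
  define j where "j = (LEAST k. \<mu> k \<noteq> \<nu> k)"
  have d: "\<mu> j \<noteq> \<nu> j" unfolding j_def by (rule LeastI_ex[OF ex])
  have pre: "\<forall>k<j. \<mu> k = \<nu> k" unfolding j_def using not_less_Least by blast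
  have bm: "bin \<mu>" and bn: "bin \<nu>" using Fstar_bin assms by auto
  have "\<mu> j \<le> 1" "\<nu> j \<le> 1" using bm bn by (auto simp: bin_def)
  then have "(\<mu> j = 1 \<and> \<nu> j = 0) \<or> (\<mu> j = 0 \<and> \<nu> j = 1)" using d by auto
  then show False
  proof
    assume "\<mu> j = 1 \<and> \<nu> j = 0"
    then have "dotF \<nu> < dotF \<mu>" using dotF_less[OF assms(2) bm] pre by auto
    then show False using assms(3) by simp
  next
    assume "\<mu> j = 0 \<and> \<nu> j = 1"
    then have "dotF \<mu> < dotF \<nu>" using dotF_less[OF assms(1) bn] pre by auto
    then show False using assms(3) by simp
  qed
qed

lemma expansion:
  "0 \<le> t \<Longrightarrow> t < 1 \<Longrightarrow> \<exists>b. bin b \<and> b 0 = 0 \<and> (\<forall>i>s. b i = 0) \<and>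
     (\<Sum>i\<le>s. real (b i) * omega ^ i) \<le> t \<and> t < (\<Sum>i\<le>s. real (b i) * omega ^ i) + omega ^ s"
proof (induction s arbitrary: t rule: less_induct)
  case (less s)
  show ?case
  proof (cases "s = 0")
    case True
    then show ?thesis using less.prems by (intro exI[of _ "\<lambda>_. 0"]) (auto simp: bin_def)
  next
    case False
    then obtain s1 where s1: "s = Suc s1" by (cases s) auto
    show ?thesis
    proof (cases "t < omega")
      case True
      define t' where "t' = t / omega"
      have t': "0 \<le> t'" "t' < 1" using True less.prems omega_pos by (auto simp: t'_def field_simps)
      obtain b' where b': "bin b'" "b' 0 = 0" "\<forall>i>s1. b' i = 0"
        "(\<Sum>i\<le>s1. real (b' i) * omega ^ i) \<le> t'" "t' < (\<Sum>i\<le>s1. real (b' i) * omega ^ i) + omega ^ s1"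
        using less.IH[of s1 t'] s1 t' by auto
      define b where "b i = (if i = 0 then 0 else b' (i - 1))" for i
      have bb: "bin b" using b'(1) unfolding bin_def b_def
      proof (intro conjI allI)
        fix k assume "(\<forall>k. b' k \<le> 1) \<and> (\<forall>k. b' k * b' (Suc k) = 0)"
        then show "(if k = 0 then 0 else b' (k - 1)) \<le> 1"
          "(if k = 0 then 0 else b' (k - 1)) * (if Suc k = 0 then 0 else b' (Suc k - 1)) = 0"
          by (cases k; auto)+
      qed
      have sum: "(\<Sum>i\<le>s. real (b i) * omega ^ i) = omega * (\<Sum>i\<le>s1. real (b' i) * omega ^ i)"
        unfolding s1 by (subst sum.atMost_Suc_shift) (simp add: b_def sum_distrib_left mult_ac)
      have tt: "t = omega * t'" using omega_pos by (simp add: t'_def)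
      show ?thesis
      proof (intro exI[of _ b] conjI)
        show "bin b" by (rule bb)
        show "b 0 = 0" by (simp add: b_def)
        show "\<forall>i>s. b i = 0" using b'(3) s1 by (auto simp: b_def)
        show "(\<Sum>i\<le>s. real (b i) * omega ^ i) \<le> t"
          unfolding sum tt using b'(4) omega_pos by (intro mult_left_mono) auto
        have "omega * t' < omega * ((\<Sum>i\<le>s1. real (b' i) * omega ^ i) + omega ^ s1)"
          using b'(5) omega_pos by (intro mult_strict_left_mono) auto
        then show "t < (\<Sum>i\<le>s. real (b i) * omega ^ i) + omega ^ s"
          unfolding sum tt using s1 by (simp add: algebra_simps)
      qed
    next
      case False
      then have tw: "omega \<le> t" by simp
      show ?thesis
      proof (cases "s1 = 0")
        case True
        define b :: "nat \<Rightarrow> nat" where "b i = (if i = 1 then 1 else 0)" for i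
        show ?thesis
        proof (intro exI[of _ b] conjI)
          show "bin b" by (auto simp: bin_def b_def)
          show "b 0 = 0" by (simp add: b_def)
          show "\<forall>i>s. b i = 0" using s1 True by (auto simp: b_def)
          show "(\<Sum>i\<le>s. real (b i) * omega ^ i) \<le> t" using s1 True tw by (simp add: b_def)
          show "t < (\<Sum>i\<le>s. real (b i) * omega ^ i) + omega ^ s" using s1 True two_omega less.prems
            by (simp add: b_def)
        qed
      next
        case False
        then obtain s2 where s2: "s1 = Suc s2" by (cases s1) auto
        define t' where "t' = (t - omega) / omega ^ 2"
        have t': "0 \<le> t'" "t' < 1" using tw less.prems omega_pos omega_eq by (auto simp: t'_def field_simps)
        obtain b' where b': "bin b'" "b' 0 = 0" "\<forall>i>s2. b' i = 0"
          "(\<Sum>i\<le>s2. real (b' i) * omega ^ i) \<le> t'" "t' < (\<Sum>i\<le>s2. real (b' i) * omega ^ i) + omega ^ s2"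
          using less.IH[of s2 t'] s1 s2 t' by auto
        define b where "b i = (if i = 0 then 0 else if i = 1 then 1 else b' (i - 2))" for i
        have bb: "bin b" using b'(1,2) unfolding bin_def b_def
        proof (intro conjI allI)
          fix k assume "(\<forall>k. b' k \<le> 1) \<and> (\<forall>k. b' k * b' (Suc k) = 0)" "b' 0 = 0"
          then show "(if k = 0 then 0 else if k = 1 then 1 else b' (k - 2)) \<le> 1"
            "(if k = 0 then 0 else if k = 1 then 1 else b' (k - 2)) * (if Suc k = 0 then 0 else if Suc k = 1 then 1 else b' (Suc k - 2)) = 0"
            by (cases k; cases "k - 1"; auto)+
        qed
        have sum: "(\<Sum>i\<le>s. real (b i) * omega ^ i) = omega + omega ^ 2 * (\<Sum>i\<le>s2. real (b' i) * omega ^ i)"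
          unfolding s1 s2 by (subst sum.atMost_Suc_shift, subst sum.atMost_Suc_shift)
            (simp add: b_def sum_distrib_left mult_ac power2_eq_square)
        have tt: "t = omega + omega ^ 2 * t'" using omega_pos by (simp add: t'_def)
        show ?thesis
        proof (intro exI[of _ b] conjI)
          show "bin b" by (rule bb)
          show "b 0 = 0" by (simp add: b_def)
          show "\<forall>i>s. b i = 0" using b'(3) s1 s2 by (auto simp: b_def)
          have "omega ^ 2 * (\<Sum>i\<le>s2. real (b' i) * omega ^ i) \<le> omega ^ 2 * t'"
            using b'(4) omega_pos by (intro mult_left_mono) auto
          then show "(\<Sum>i\<le>s. real (b i) * omega ^ i) \<le> t"
            unfolding sum tt by simp
          have "omega ^ 2 * t' < omega ^ 2 * ((\<Sum>i\<le>s2. real (b' i) * omega ^ i) + omega ^ s2)"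
            using b'(5) omega_pos by (intro mult_strict_left_mono) auto
          then show "t < (\<Sum>i\<le>s. real (b i) * omega ^ i) + omega ^ s"
            unfolding sum tt using s1 s2 by (simp add: algebra_simps power2_eq_square)
        qed
      qed
    qed
  qed
qed



lemma Dpoint:
  assumes "0 \<le> t" "t < 1"
  shows "\<exists>\<mu> y N. \<mu> \<in> Fstar \<and> \<mu> 0 = 1 \<and> y = phi * (dotF \<mu> - 1) \<and> y \<le> t \<and> t < y + omega ^ s \<and>
    (\<forall>s'\<ge>N. Pq \<mu> s' = y)"
proof -
  obtain b where b: "bin b" "b 0 = 0" "\<forall>i>s. b i = 0"
    "(\<Sum>i\<le>s. real (b i) * omega ^ i) \<le> t" "t < (\<Sum>i\<le>s. real (b i) * omega ^ i) + omega ^ s"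
    using expansion[OF assms] by blast
  define \<mu> where "\<mu> i = (if i = 0 then 1 else b (i - 1))" for i
  define y where "y = (\<Sum>i\<le>s. real (b i) * omega ^ i)"
  have b1: "b k \<le> 1" for k using b(1) by (simp add: bin_def)
  have b2: "b k * b (Suc k) = 0" for k using b(1) by (simp add: bin_def)
  have m01: "\<mu> k \<in> {0, 1}" for k using b1[of "k - 1"] by (auto simp: \<mu>_def)
  have madj: "\<mu> k * \<mu> (Suc k) = 0" for k using b2[of "k - 1"] b(2) by (cases k) (auto simp: \<mu>_def)
  have malt: "\<not> (\<exists>j. \<forall>i. \<mu> (j + 2 * i) = 1 \<and> \<mu> (j + 2 * i + 1) = 0)"
  proof
    assume "\<exists>j. \<forall>i. \<mu> (j + 2 * i) = 1 \<and> \<mu> (j + 2 * i + 1) = 0"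
    then obtain j where j: "\<forall>i. \<mu> (j + 2 * i) = 1" by blast
    have "\<mu> (j + 2 * (s + 2)) = 0" using b(3) by (auto simp: \<mu>_def)
    then show False using j[rule_format, of "s + 2"] by simp
  qed
  have mF: "\<mu> \<in> Fstar" unfolding Fstar_def using m01 madj malt by blast
  have fin: "(\<Sum>k. real (\<mu> k) * omega ^ k) = (\<Sum>k\<le>Suc s. real (\<mu> k) * omega ^ k)"
  proof (rule suminf_finite)
    show "finite {..Suc s}" by simp
    fix n assume "n \<notin> {..Suc s}"
    then show "real (\<mu> n) * omega ^ n = 0" using b(3) by (auto simp: \<mu>_def)
  qed
  have "(\<Sum>k\<le>Suc s. real (\<mu> k) * omega ^ k) = 1 + omega * y"
    by (subst sum.atMost_Suc_shift) (simp add: \<mu>_def y_def sum_distrib_left mult_ac)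
  then have dF: "dotF \<mu> = 1 + omega * y" using fin by (simp add: dotF_def)
  have yv: "y = phi * (dotF \<mu> - 1)" using dF phi_omega by (simp add: mult.assoc[symmetric])
  have Pq: "Pq \<mu> s' = y" if "s' \<ge> Suc s" for s'
  proof -
    have "Pq \<mu> s' = (\<Sum>i<s'. real (b i) * omega ^ i)" by (simp add: Pq_def \<mu>_def)
    also have "\<dots> = (\<Sum>i\<le>s. real (b i) * omega ^ i)"
      by (rule sum.mono_neutral_right) (use that b(3) in auto)
    finally show ?thesis by (simp add: y_def)
  qed
  have Pq': "\<forall>s'\<ge>Suc s. Pq \<mu> s' = y" using Pq by auto
  have yt: "y \<le> t" "t < y + omega ^ s" using b(4,5) by (auto simp: y_def)
  show ?thesis
    by (intro exI[of _ \<mu>] exI[of _ y] exI[of _ "Suc s"] conjI mF yv Pq' yt) (simp add: \<mu>_def)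
qed

lemma fK_at:
  assumes "\<mu> \<in> Fstar" "\<mu> 0 = 1" "y = phi * (dotF \<mu> - 1)" "0 < y" "y < 1"
  shows "fKstar K y = lim (\<lambda>s. lim (LB_cdf K \<mu> s))"
proof -
  have "(THE \<nu>. \<nu> \<in> Fstar \<and> \<nu> 0 = 1 \<and> phi * (dotF \<nu> - 1) = y) = \<mu>"
  proof (rule the_equality)
    show "\<mu> \<in> Fstar \<and> \<mu> 0 = 1 \<and> phi * (dotF \<mu> - 1) = y" using assms by simp
    fix \<nu> assume a: "\<nu> \<in> Fstar \<and> \<nu> 0 = 1 \<and> phi * (dotF \<nu> - 1) = y"
    then have "phi * (dotF \<nu> - 1) = phi * (dotF \<mu> - 1)" using assms by simp
    then have "dotF \<nu> = dotF \<mu>" using phi_gt1 by simp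
    then show "\<nu> = \<mu>" using dotF_inj a assms(1) by blast
  qed
  then show ?thesis using assms(4,5) unfolding fKstar_def by (simp add: Let_def)
qed



lemma omega_small: "d > 0 \<Longrightarrow> \<exists>p. omega ^ p < d"
  using real_arch_pow_inv[of d omega] omega_lt1 by auto

lemma omega_pow_mono: "p \<le> q \<Longrightarrow> omega ^ q \<le> omega ^ p"
  using omega_pos omega_lt1 by (intro power_decreasing) auto

context
  fixes K :: "nat \<Rightarrow> nat"
  assumes Kpos: "\<forall>k\<ge>1. K k > 0"
    and Klim: "filterlim K at_top sequentially"
    and Kc: "cont_LB_dist K"
begin

lemma ev_len: "\<exists>k0. \<forall>k\<ge>k0. length (zeck (K k)) \<ge> M0"
proof -
  have "eventually (\<lambda>k. FF M0 \<le> K k) sequentially" using Klim by (simp add: filterlim_at_top)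
  then obtain k1 where k1: "\<forall>k\<ge>k1. FF M0 \<le> K k" by (auto simp: eventually_sequentially)
  show ?thesis
  proof (intro exI[of _ k1] allI impI)
    fix k assume "k1 \<le> k"
    then have a: "FF M0 \<le> K k" using k1 by simp
    then have K1: "K k \<ge> 1" using FF_pos[of M0] by simp
    have b: "K k < FF (Suc (length (zeck (K k))))" using zeck_bounds[OF K1] by simp
    show "length (zeck (K k)) \<ge> M0"
    proof (rule ccontr)
      assume "\<not> M0 \<le> length (zeck (K k))"
      then have "FF (Suc (length (zeck (K k)))) \<le> FF M0" by (intro FF_mono) simp
      then show False using a b by simp
    qed
  qed
qed

lemma cd_conv: "\<mu> \<in> Fstar \<Longrightarrow> \<mu> 0 = 1 \<Longrightarrow> convergent (LB_cdf K \<mu> s) \<and> convergent (\<lambda>s. lim (LB_cdf K \<mu> s))"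
  using Kc unfolding cont_LB_dist_def by blast

lemma card_shift:
  assumes "\<forall>k\<ge>k0. k \<ge> 1 \<longrightarrow> P k \<longrightarrow> Q k"
  shows "card {k \<in> {1..n}. P k} \<le> card {k \<in> {1..n}. Q k} + k0"
proof -
  have "{k \<in> {1..n}. P k} \<subseteq> {k \<in> {1..n}. Q k} \<union> {..<k0}" using assms by auto
  then have "card {k \<in> {1..n}. P k} \<le> card ({k \<in> {1..n}. Q k} \<union> {..<k0})" by (intro card_mono) auto
  also have "\<dots> \<le> card {k \<in> {1..n}. Q k} + card {..<k0}" by (rule card_Un_le)
  finally show ?thesis by simp
qed

lemma lower:
  assumes mu: "\<mu> \<in> Fstar" "\<mu> 0 = 1" and y: "y = phi * (dotF \<mu> - 1)" "0 < y" "y < 1"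
    and N: "\<forall>s'\<ge>N. Pq \<mu> s' = y" and yx: "y < x" and e: "\<epsilon> > 0"
  shows "\<exists>n0. \<forall>n\<ge>n0. real (card {k \<in> {1..n}. rK (K k) \<le> x}) / real n \<ge> fKstar K y - \<epsilon>"
proof -
  define L where "L s = lim (LB_cdf K \<mu> s)" for s
  have cv: "convergent (LB_cdf K \<mu> s)" for s using cd_conv[OF mu] by blast
  have cL: "convergent L" using cd_conv[OF mu, of 0] by (simp add: L_def[abs_def])
  have fy: "fKstar K y = lim L" using fK_at[OF mu y] by (simp add: L_def[abs_def])
  have LS: "(\<lambda>s. L (Suc s)) \<longlonglongrightarrow> fKstar K y"
    using cL fy by (simp add: convergent_LIMSEQ_iff LIMSEQ_Suc)
  obtain p where p: "omega ^ p < x - y" using omega_small[of "x - y"] yx by auto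
  have "eventually (\<lambda>s'. N \<le> s' \<and> Suc p \<le> s' \<and> dist (L (Suc s')) (fKstar K y) < \<epsilon> / 3) sequentially"
    using eventually_conj[OF eventually_ge_at_top[of N] eventually_conj[OF eventually_ge_at_top[of "Suc p"] tendstoD[OF LS, of "\<epsilon>/3"]]] e
    by simp
  then obtain s' where s': "N \<le> s'" "Suc p \<le> s'" "dist (L (Suc s')) (fKstar K y) < \<epsilon> / 3"
    unfolding eventually_sequentially by blast
  have Pq: "Pq \<mu> s' = y" using N s' by simp
  have "p \<le> s' - 1" using s' by simp
  then have ws: "omega ^ (s' - 1) < x - y" using omega_pow_mono[of p "s' - 1"] p by linarith
  define hi where "hi M = Aq \<mu> s' M + real (FF (Suc (M - Suc s'))) / real (FF (M - 1))" for M
  have "hi \<longlonglongrightarrow> Pq \<mu> s' + omega ^ (s' - 1)"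
    unfolding hi_def using s' by (intro tendsto_add Aq_lim FF_ratio_bnd) auto
  then have "eventually (\<lambda>M. hi M < x) sequentially"
    using Pq ws by (intro order_tendstoD(2)) auto
  then obtain M0 where M0: "\<forall>M\<ge>M0. hi M < x" by (auto simp: eventually_sequentially)
  obtain k0 where k0: "\<forall>k\<ge>k0. length (zeck (K k)) \<ge> max M0 (Suc s')" using ev_len by blast
  have mb: "\<forall>k. \<mu> k \<in> {0, 1}" "\<forall>k. \<mu> k * \<mu> (Suc k) = 0" using mu(1) by (auto simp: Fstar_def)
  have imp: "\<forall>k\<ge>k0. k \<ge> 1 \<longrightarrow> (\<exists>c. LB (Suc s') (K k) = Some c \<and> lex_le c (restr \<mu> (Suc s'))) \<longrightarrow> rK (K k) \<le> x"
  proof (intro allI impI)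
    fix k assume k: "k0 \<le> k" "1 \<le> k" and c: "\<exists>c. LB (Suc s') (K k) = Some c \<and> lex_le c (restr \<mu> (Suc s'))"
    have K1: "K k \<ge> 1" using Kpos k by auto
    have len: "length (zeck (K k)) \<ge> max M0 (Suc s')" using k0 k by simp
    then have ll: "lex_le (take (Suc s') (zeck (K k))) (restr \<mu> (Suc s'))" using c by (auto simp: LB_def)
    have "rK (K k) < hi (length (zeck (K k)))"
      unfolding hi_def using rK_lt[OF K1 mb mu(2) _ ll] len by simp
    also have "\<dots> < x" using M0 len by simp
    finally show "rK (K k) \<le> x" by simp
  qed
  define A where "A n = card {k \<in> {1..n}. \<exists>c. LB (Suc s') (K k) = Some c \<and> lex_le c (restr \<mu> (Suc s'))}" for n
  define B where "B n = card {k \<in> {1..n}. rK (K k) \<le> x}" for n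
  have AB: "A n \<le> B n + k0" for n unfolding A_def B_def by (rule card_shift[OF imp])
  have c1: "LB_cdf K \<mu> (Suc s') \<longlonglongrightarrow> L (Suc s')" using cv by (simp add: convergent_LIMSEQ_iff L_def)
  have ev1: "eventually (\<lambda>n. L (Suc s') - \<epsilon> / 3 < LB_cdf K \<mu> (Suc s') n) sequentially"
    using e by (intro order_tendstoD(1)[OF c1]) simp
  have ev2: "eventually (\<lambda>n. real k0 / real n < \<epsilon> / 3) sequentially"
    using e by (intro order_tendstoD(2)[OF lim_const_over_n]) simp
  have ev3: "eventually (\<lambda>n. n \<ge> 1) sequentially" by (rule eventually_ge_at_top)
  obtain n0 where n0: "\<forall>n\<ge>n0. L (Suc s') - \<epsilon> / 3 < LB_cdf K \<mu> (Suc s') n \<and> real k0 / real n < \<epsilon> / 3 \<and> n \<ge> 1"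
    using eventually_conj[OF ev1 eventually_conj[OF ev2 ev3]] by (auto simp: eventually_sequentially)
  show ?thesis
  proof (intro exI[of _ n0] allI impI)
    fix n assume "n0 \<le> n"
    then have h: "L (Suc s') - \<epsilon> / 3 < real (A n) / real n" "real k0 / real n < \<epsilon> / 3" "n \<ge> 1"
      using n0 by (auto simp: LB_cdf_def A_def)
    have "real (A n) / real n \<le> (real (B n) + real k0) / real n"
      using AB[of n] h(3) by (intro divide_right_mono) auto
    also have "\<dots> = real (B n) / real n + real k0 / real n" by (simp add: add_divide_distrib)
    finally have "L (Suc s') - \<epsilon> / 3 < real (B n) / real n + \<epsilon> / 3" using h by linarith
    moreover have "fKstar K y - \<epsilon> / 3 < L (Suc s')" using s'(3) unfolding dist_real_def by linarith
    ultimately show "fKstar K y - \<epsilon> \<le> real (card {k \<in> {1..n}. rK (K k) \<le> x}) / real n"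
      unfolding B_def by linarith
  qed
qed

lemma upper:
  assumes mu: "\<mu> \<in> Fstar" "\<mu> 0 = 1" and z: "z = phi * (dotF \<mu> - 1)" "0 < z" "z < 1"
    and N: "\<forall>s'\<ge>N. Pq \<mu> s' = z" and xz: "x < z" and e: "\<epsilon> > 0"
  shows "\<exists>n0. \<forall>n\<ge>n0. real (card {k \<in> {1..n}. rK (K k) \<le> x}) / real n \<le> fKstar K z + \<epsilon>"
proof -
  define L where "L s = lim (LB_cdf K \<mu> s)" for s
  have cv: "convergent (LB_cdf K \<mu> s)" for s using cd_conv[OF mu] by blast
  have cL: "convergent L" using cd_conv[OF mu, of 0] by (simp add: L_def[abs_def])
  have fz: "fKstar K z = lim L" using fK_at[OF mu z] by (simp add: L_def[abs_def])
  have LS: "(\<lambda>s. L (Suc s)) \<longlonglongrightarrow> fKstar K z"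
    using cL fz by (simp add: convergent_LIMSEQ_iff LIMSEQ_Suc)
  have "eventually (\<lambda>s'. N \<le> s' \<and> dist (L (Suc s')) (fKstar K z) < \<epsilon> / 3) sequentially"
    using eventually_conj[OF eventually_ge_at_top[of N] tendstoD[OF LS, of "\<epsilon>/3"]] e
    by simp
  then obtain s' where s': "N \<le> s'" "dist (L (Suc s')) (fKstar K z) < \<epsilon> / 3"
    unfolding eventually_sequentially by blast
  have Pq: "Pq \<mu> s' = z" using N s' by simp
  have "(\<lambda>M. Aq \<mu> s' M) \<longlonglongrightarrow> Pq \<mu> s'" by (rule Aq_lim)
  then have "eventually (\<lambda>M. x < Aq \<mu> s' M) sequentially"
    using Pq xz by (intro order_tendstoD(1)) auto
  then obtain M0 where M0: "\<forall>M\<ge>M0. x < Aq \<mu> s' M" by (auto simp: eventually_sequentially)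
  obtain k0 where k0: "\<forall>k\<ge>k0. length (zeck (K k)) \<ge> max M0 (Suc s')" using ev_len by blast
  have mb: "\<forall>k. \<mu> k \<in> {0, 1}" "\<forall>k. \<mu> k * \<mu> (Suc k) = 0" using mu(1) by (auto simp: Fstar_def)
  have imp: "\<forall>k\<ge>k0. k \<ge> 1 \<longrightarrow> rK (K k) \<le> x \<longrightarrow> (\<exists>c. LB (Suc s') (K k) = Some c \<and> lex_le c (restr \<mu> (Suc s')))"
  proof (intro allI impI)
    fix k assume k: "k0 \<le> k" "1 \<le> k" and r: "rK (K k) \<le> x"
    have K1: "K k \<ge> 1" using Kpos k by auto
    have len: "length (zeck (K k)) \<ge> max M0 (Suc s')" using k0 k by simp
    have ll: "lex_le (take (Suc s') (zeck (K k))) (restr \<mu> (Suc s'))"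
    proof (rule ccontr)
      assume nl: "\<not> lex_le (take (Suc s') (zeck (K k))) (restr \<mu> (Suc s'))"
      have "rK (K k) > Aq \<mu> s' (length (zeck (K k)))" using rK_gt[OF K1 mb mu(2) _ nl] len by simp
      moreover have "x < Aq \<mu> s' (length (zeck (K k)))" using M0 len by simp
      ultimately show False using r by simp
    qed
    then show "\<exists>c. LB (Suc s') (K k) = Some c \<and> lex_le c (restr \<mu> (Suc s'))"
      using len by (auto simp: LB_def)
  qed
  define A where "A n = card {k \<in> {1..n}. \<exists>c. LB (Suc s') (K k) = Some c \<and> lex_le c (restr \<mu> (Suc s'))}" for n
  define B where "B n = card {k \<in> {1..n}. rK (K k) \<le> x}" for n
  have AB: "B n \<le> A n + k0" for n unfolding A_def B_def by (rule card_shift[OF imp])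
  have c1: "LB_cdf K \<mu> (Suc s') \<longlonglongrightarrow> L (Suc s')" using cv by (simp add: convergent_LIMSEQ_iff L_def)
  have ev1: "eventually (\<lambda>n. LB_cdf K \<mu> (Suc s') n < L (Suc s') + \<epsilon> / 3) sequentially"
    using e by (intro order_tendstoD(2)[OF c1]) simp
  have ev2: "eventually (\<lambda>n. real k0 / real n < \<epsilon> / 3) sequentially"
    using e by (intro order_tendstoD(2)[OF lim_const_over_n]) simp
  have ev3: "eventually (\<lambda>n. n \<ge> 1) sequentially" by (rule eventually_ge_at_top)
  obtain n0 where n0: "\<forall>n\<ge>n0. LB_cdf K \<mu> (Suc s') n < L (Suc s') + \<epsilon> / 3 \<and> real k0 / real n < \<epsilon> / 3 \<and> n \<ge> 1"
    using eventually_conj[OF ev1 eventually_conj[OF ev2 ev3]] by (auto simp: eventually_sequentially)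
  show ?thesis
  proof (intro exI[of _ n0] allI impI)
    fix n assume "n0 \<le> n"
    then have h: "real (A n) / real n < L (Suc s') + \<epsilon> / 3" "real k0 / real n < \<epsilon> / 3" "n \<ge> 1"
      using n0 by (auto simp: LB_cdf_def A_def)
    have "real (B n) / real n \<le> (real (A n) + real k0) / real n"
      using AB[of n] h(3) by (intro divide_right_mono) auto
    also have "\<dots> = real (A n) / real n + real k0 / real n" by (simp add: add_divide_distrib)
    finally have "real (B n) / real n < L (Suc s') + \<epsilon> / 3 + \<epsilon> / 3" using h by linarith
    moreover have "L (Suc s') < fKstar K z + \<epsilon> / 3" using s'(2) unfolding dist_real_def by linarith
    ultimately show "real (card {k \<in> {1..n}. rK (K k) \<le> x}) / real n \<le> fKstar K z + \<epsilon>"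
      unfolding B_def by linarith
  qed
qed

end



context
  fixes g :: "real \<Rightarrow> real"
  assumes gc: "continuous_on {0..1} g" and gm: "strict_mono_on {0..1} g"
    and g0: "g 0 = 0" and g1: "g 1 = 1"
begin

lemma g_le: "t \<in> {0..1} \<Longrightarrow> u \<in> {0..1} \<Longrightarrow> t \<le> u \<Longrightarrow> g t \<le> g u"
proof -
  assume a: "t \<in> {0..1}" "u \<in> {0..1}" "t \<le> u"
  show "g t \<le> g u"
  proof (cases "t = u")
    case False
    then have "t < u" using a by simp
    then show ?thesis using strict_mono_onD[OF gm a(1,2)] by simp
  qed simp
qed

lemma g_le_iff: "t \<in> {0..1} \<Longrightarrow> u \<in> {0..1} \<Longrightarrow> g t \<le> g u \<longleftrightarrow> t \<le> u"
proof
  assume a: "t \<in> {0..1}" "u \<in> {0..1}" "g t \<le> g u"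
  show "t \<le> u"
  proof (rule ccontr)
    assume "\<not> t \<le> u"
    then have "g u < g t" using strict_mono_onD[OF gm a(2,1)] by simp
    then show False using a by simp
  qed
qed (rule g_le)

lemma g_range: "g ` {0..1} = {0..1}"
proof
  show "g ` {0..1} \<subseteq> {0..1}"
  proof
    fix v assume "v \<in> g ` {0..1}"
    then obtain t where t: "t \<in> {0..1}" "v = g t" by auto
    have "g 0 \<le> g t" "g t \<le> g 1" using t g_le by auto
    then show "v \<in> {0..1}" using t g0 g1 by simp
  qed
  show "{0..1} \<subseteq> g ` {0..1}"
  proof
    fix v :: real assume v: "v \<in> {0..1}"
    obtain t where "0 \<le> t" "t \<le> 1" "g t = v" using IVT'[of g 0 v 1] gc v g0 g1 by auto
    then show "v \<in> g ` {0..1}" by force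
  qed
qed

lemma g_inj: "inj_on g {0..1}"
  by (rule strict_mono_on_imp_inj_on[OF gm])

definition ginv :: "real \<Rightarrow> real" where "ginv = the_inv_into {0..1} g"

lemma ginv_bij: "bij_betw ginv {0..1} {0..1}"
  unfolding ginv_def using bij_betw_the_inv_into[of g "{0..1}" "{0..1}"] g_inj g_range
  by (simp add: bij_betw_def)

lemma ginv_range: "p \<in> {0..1} \<Longrightarrow> ginv p \<in> {0..1}"
  using ginv_bij by (auto simp: bij_betw_def)

lemma g_ginv: "p \<in> {0..1} \<Longrightarrow> g (ginv p) = p"
  unfolding ginv_def using f_the_inv_into_f[OF g_inj] g_range by auto

lemma ginv_g: "t \<in> {0..1} \<Longrightarrow> ginv (g t) = t"
  unfolding ginv_def using the_inv_into_f_f[OF g_inj] by auto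

lemma ginv_cont: "continuous_on {0..1} ginv"
proof -
  have "continuous_on (g ` {0..1}) ginv"
    by (rule continuous_on_inv[OF gc]) (auto simp: ginv_g)
  then show ?thesis using g_range by simp
qed

lemma ginv_mono: "strict_mono_on {0..1} ginv"
proof (rule strict_mono_onI)
  fix p q :: real assume pq: "p \<in> {0..1}" "q \<in> {0..1}" "p < q"
  show "ginv p < ginv q"
  proof (rule ccontr)
    assume "\<not> ginv p < ginv q"
    then have "g (ginv q) \<le> g (ginv p)" using g_le ginv_range pq by auto
    then show False using g_ginv pq by simp
  qed
qed

lemma ginv0: "ginv 0 = 0" using ginv_g[of 0] g0 by simp
lemma ginv1: "ginv 1 = 1" using ginv_g[of 1] g1 by simp

definition ff :: "real \<Rightarrow> real" where
  "ff t = (if t < 1 then t else real (FF (nat \<lfloor>t\<rfloor>)) + real (FF (nat \<lfloor>t\<rfloor> - 1)) * ginv (t - real (nat \<lfloor>t\<rfloor>)))"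

lemma ff_piece:
  assumes m: "m \<ge> 1" and t: "real m \<le> t" "t \<le> real m + 1"
  shows "ff t = real (FF m) + real (FF (m - 1)) * ginv (t - real m)"
proof (cases "t < real m + 1")
  case True
  have "\<lfloor>t\<rfloor> = int m" using t True by (intro floor_unique) auto
  then have "nat \<lfloor>t\<rfloor> = m" by simp
  moreover have "\<not> t < 1" using m t by simp
  ultimately show ?thesis by (simp add: ff_def)
next
  case False
  then have te: "t = real (Suc m)" using t by simp
  have "\<lfloor>t\<rfloor> = int (Suc m)" using te by simp
  then have "nat \<lfloor>t\<rfloor> = Suc m" by simp
  then have "ff t = real (FF (Suc m))" using te ginv0 by (simp add: ff_def)
  also have "\<dots> = real (FF m) + real (FF (m - 1)) * ginv (t - real m)"
    using FF_rec[OF m] te ginv1 by simp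
  finally show ?thesis .
qed

lemma ff_nat: "m \<ge> 1 \<Longrightarrow> ff (real m) = real (FF m)"
  using ff_piece[of m "real m"] ginv0 by simp

lemma ff_floor:
  assumes "t \<ge> 1"
  shows "ff t = real (FF (nat \<lfloor>t\<rfloor>)) + real (FF (nat \<lfloor>t\<rfloor> - 1)) * ginv (t - real (nat \<lfloor>t\<rfloor>))"
    "nat \<lfloor>t\<rfloor> \<ge> 1" "0 \<le> t - real (nat \<lfloor>t\<rfloor>)" "t - real (nat \<lfloor>t\<rfloor>) < 1"
proof -
  show "ff t = real (FF (nat \<lfloor>t\<rfloor>)) + real (FF (nat \<lfloor>t\<rfloor> - 1)) * ginv (t - real (nat \<lfloor>t\<rfloor>))"
    using assms by (simp add: ff_def)
  show "nat \<lfloor>t\<rfloor> \<ge> 1" using assms by linarith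
  have "real (nat \<lfloor>t\<rfloor>) = of_int \<lfloor>t\<rfloor>" using assms by simp
  then show "0 \<le> t - real (nat \<lfloor>t\<rfloor>)" "t - real (nat \<lfloor>t\<rfloor>) < 1" by linarith+
qed

lemma ginv_lt1: "0 \<le> q \<Longrightarrow> q < 1 \<Longrightarrow> ginv q < 1"
  using strict_mono_onD[OF ginv_mono, of q 1] ginv1 by simp

lemma ginv_ge0: "0 \<le> q \<Longrightarrow> q \<le> 1 \<Longrightarrow> ginv q \<ge> 0"
  using ginv_range by auto

lemma ff_mono: "strict_mono_on {1..} ff"
proof (rule strict_mono_onI)
  fix s t :: real assume st: "s \<in> {1..}" "t \<in> {1..}" "s < t"
  define m where "m = nat \<lfloor>s\<rfloor>"
  define n where "n = nat \<lfloor>t\<rfloor>"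
  have fs: "ff s = real (FF m) + real (FF (m - 1)) * ginv (s - real m)" "m \<ge> 1" "0 \<le> s - real m" "s - real m < 1"
    using ff_floor[of s] st unfolding m_def by auto
  have ft: "ff t = real (FF n) + real (FF (n - 1)) * ginv (t - real n)" "n \<ge> 1" "0 \<le> t - real n" "t - real n < 1"
    using ff_floor[of t] st unfolding n_def by auto
  have mn: "m \<le> n" unfolding m_def n_def using st by (simp add: floor_mono nat_mono)
  have pos: "real (FF (k - 1)) > 0" for k using FF_pos by simp
  show "ff s < ff t"
  proof (cases "m = n")
    case True
    have "ginv (s - real m) < ginv (t - real m)"
      using ginv_mono fs ft st True by (auto simp: strict_mono_on_def)
    then show ?thesis using fs ft True pos[of m] by simp
  next
    case False
    then have "Suc m \<le> n" using mn by simp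
    then have "FF (Suc m) \<le> FF n" by (rule FF_mono)
    moreover have "ginv (s - real m) < 1" using ginv_lt1 fs by simp
    then have "real (FF (m - 1)) * ginv (s - real m) < real (FF (m - 1))"
      using pos[of m] by simp
    then have "ff s < real (FF (Suc m))" using fs FF_rec[OF fs(2)] by simp
    moreover have "ginv (t - real n) \<ge> 0" using ginv_ge0 ft by simp
    then have "ff t \<ge> real (FF n)" using ft by simp
    ultimately show ?thesis by linarith
  qed
qed

lemma ff_cont_piece: "m \<ge> 1 \<Longrightarrow> continuous_on {real m..real m + 1} ff"
proof -
  assume m: "m \<ge> 1"
  have "continuous_on {real m..real m + 1} (\<lambda>t. real (FF m) + real (FF (m - 1)) * ginv (t - real m))"
  proof (intro continuous_intros)
    have "continuous_on {real m..real m + 1} (\<lambda>t. t - real m)" by (intro continuous_intros)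
    moreover have "(\<lambda>t. t - real m) ` {real m..real m + 1} \<subseteq> {0..1}" by auto
    ultimately show "continuous_on {real m..real m + 1} (\<lambda>t. ginv (t - real m))"
      using continuous_on_compose2[OF ginv_cont] by blast
  qed
  then show ?thesis by (rule continuous_on_eq) (use m in \<open>auto simp: ff_piece\<close>)
qed

lemma ff_cont_N: "continuous_on {1..real N} ff"
proof -
  have incl: "{1..real N} \<subseteq> (\<Union>m\<in>{1..<N}. {real m..real m + 1})" if N2: "N \<ge> 2"
  proof
    fix t assume t0: "t \<in> {1..real N}"
    then have t: "1 \<le> t" "t \<le> real N" by auto
    show "t \<in> (\<Union>m\<in>{1..<N}. {real m..real m + 1})"
    proof (cases "t < real N")
      case True
      have "nat \<lfloor>t\<rfloor> \<ge> 1" using t by linarith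
      moreover have "nat \<lfloor>t\<rfloor> < N" using t True by linarith
      moreover have "real (nat \<lfloor>t\<rfloor>) \<le> t" using t by linarith
      moreover have "t \<le> real (nat \<lfloor>t\<rfloor>) + 1" using t by linarith
      ultimately show ?thesis by auto
    next
      case False
      then have te: "t = real N" using t by auto
      then show ?thesis using N2 by (intro UN_I[of "N - 1"]) auto
    qed
  qed
  then show ?thesis
  proof (cases "N \<ge> 2")
    case True
    have "continuous_on (\<Union>m\<in>{1..<N}. {real m..real m + 1}) ff"
      by (rule continuous_on_closed_Union) (auto intro: ff_cont_piece)
    then show ?thesis using incl[OF True] continuous_on_subset by blast
  next
    case False
    then have "{1..real N} \<subseteq> {1}" by auto
    then show ?thesis using continuous_on_subset[OF continuous_on_sing] by blast
  qed
qed

lemma ff_cont: "continuous_on {1..} ff"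
proof (unfold continuous_on_eq_continuous_within, intro ballI)
  fix t :: real assume t: "t \<in> {1..}"
  define N where "N = nat \<lceil>t\<rceil> + 1"
  have tN: "t < real N" unfolding N_def by linarith
  have "continuous (at t within {1..real N}) ff"
    using ff_cont_N t tN by (simp add: continuous_on_eq_continuous_within)
  moreover have "at t within {1..} = at t within {1..real N}"
    by (rule at_within_nhd[of _ "{..<real N}"]) (use tN in auto)
  ultimately show "continuous (at t within {1..}) ff" by (simp add: continuous_within)
qed

end



context
  fixes K :: "nat \<Rightarrow> nat"
  assumes Kpos: "\<forall>k\<ge>1. K k > 0"
    and Klim: "filterlim K at_top sequentially"
    and Kc: "cont_LB_dist K"
begin

lemma cnt_lim:
  assumes x: "0 \<le> x" "x < 1"
  shows "(\<lambda>n. real (card {k \<in> {1..n}. rK (K k) \<le> x}) / real n) \<longlonglongrightarrow> fKstar K x"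
proof (rule LIMSEQ_I)
  fix r :: real assume r: "r > 0"
  define X where "X n = real (card {k \<in> {1..n}. rK (K k) \<le> x}) / real n" for n
  have fc: "continuous_on {0..1} (fKstar K)" using Kc by (simp add: cont_LB_dist_def)
  obtain \<delta> where d: "\<delta> > 0" "\<forall>t\<in>{0..1}. dist t x < \<delta> \<longrightarrow> dist (fKstar K t) (fKstar K x) < r / 2"
  proof -
    have "x \<in> {0..1}" using x by simp
    moreover have "r / 2 > 0" using r by simp
    ultimately show ?thesis using fc unfolding continuous_on_iff using that by blast
  qed
  have up: "\<exists>n1. \<forall>n\<ge>n1. X n < fKstar K x + r"
  proof -
    define d1 where "d1 = min \<delta> (1 - x)"
    have d1: "d1 > 0" "d1 \<le> \<delta>" "d1 \<le> 1 - x" using d x by (auto simp: d1_def)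
    define t where "t = x + d1 / 2"
    obtain p where p: "omega ^ p < d1 / 2" using omega_small[of "d1/2"] d1 by auto
    obtain \<mu> z N where D: "\<mu> \<in> Fstar" "\<mu> 0 = 1" "z = phi * (dotF \<mu> - 1)" "z \<le> t" "t < z + omega ^ p"
      "\<forall>s'\<ge>N. Pq \<mu> s' = z"
      using Dpoint[of t p] x d1 unfolding t_def by auto
    have zx: "x < z" using D p unfolding t_def by linarith
    have z1: "z < 1" using D d1 unfolding t_def by linarith
    have "dist z x < \<delta>" using D zx d1 unfolding t_def dist_real_def by auto
    then have "dist (fKstar K z) (fKstar K x) < r / 2" using d(2) zx z1 x by auto
    then have "fKstar K z < fKstar K x + r / 2" unfolding dist_real_def by linarith
    moreover obtain n1 where nn: "\<forall>n\<ge>n1. X n \<le> fKstar K z + r / 2"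
      using upper[OF Kpos Klim Kc D(1,2,3) _ z1 D(6) zx, of "r/2"] zx x r unfolding X_def by auto
    ultimately show ?thesis
    proof (intro exI[of _ n1] allI impI)
      fix n assume "n1 \<le> n"
      then have "X n \<le> fKstar K z + r / 2" using nn by simp
      then show "X n < fKstar K x + r" using \<open>fKstar K z < fKstar K x + r / 2\<close> by linarith
    qed
  qed
  have lo: "\<exists>n2. \<forall>n\<ge>n2. X n > fKstar K x - r"
  proof (cases "x = 0")
    case True
    have "fKstar K 0 = 0" by (simp add: fKstar_def)
    moreover have X0: "X n \<ge> 0" for n by (simp add: X_def)
    ultimately show ?thesis using True r
    proof (intro exI[of _ 0] allI impI)
      fix n show "X n > fKstar K x - r" using X0[of n] True r \<open>fKstar K 0 = 0\<close> by simp
    qed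
  next
    case False
    then have x0: "x > 0" using x by simp
    define d1 where "d1 = min \<delta> x"
    have d1: "d1 > 0" "d1 \<le> \<delta>" "d1 \<le> x" using d x0 by (auto simp: d1_def)
    define t where "t = x - d1 / 2"
    obtain p where p: "omega ^ p < d1 / 2" using omega_small[of "d1/2"] d1 by auto
    obtain \<mu> y N where D: "\<mu> \<in> Fstar" "\<mu> 0 = 1" "y = phi * (dotF \<mu> - 1)" "y \<le> t" "t < y + omega ^ p"
      "\<forall>s'\<ge>N. Pq \<mu> s' = y"
      using Dpoint[of t p] x d1 unfolding t_def by auto
    have yx: "y < x" using D d1 unfolding t_def by linarith
    have y0: "0 < y" using D p d1 unfolding t_def by linarith
    have y1: "y < 1" using yx x by simp
    have "dist y x < \<delta>" using D p d1 yx unfolding t_def dist_real_def by auto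
    then have "dist (fKstar K y) (fKstar K x) < r / 2" using d(2) y0 y1 by auto
    then have "fKstar K y > fKstar K x - r / 2" unfolding dist_real_def by linarith
    moreover obtain n2 where nn: "\<forall>n\<ge>n2. X n \<ge> fKstar K y - r / 2"
      using lower[OF Kpos Klim Kc D(1,2,3) y0 y1 D(6) yx, of "r/2"] r unfolding X_def by auto
    ultimately show ?thesis
    proof (intro exI[of _ n2] allI impI)
      fix n assume "n2 \<le> n"
      then have "X n \<ge> fKstar K y - r / 2" using nn by simp
      then show "X n > fKstar K x - r" using \<open>fKstar K y > fKstar K x - r / 2\<close> by linarith
    qed
  qed
  obtain n1 where n1: "\<forall>n\<ge>n1. X n < fKstar K x + r" using up by blast
  obtain n2 where n2: "\<forall>n\<ge>n2. X n > fKstar K x - r" using lo by blast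
  show "\<exists>no. \<forall>n\<ge>no. norm (real (card {k \<in> {1..n}. rK (K k) \<le> x}) / real n - fKstar K x) < r"
  proof (intro exI[of _ "max n1 n2"] allI impI)
    fix n assume "max n1 n2 \<le> n"
    then have "X n < fKstar K x + r" "X n > fKstar K x - r" using n1 n2 by auto
    then show "norm (real (card {k \<in> {1..n}. rK (K k) \<le> x}) / real n - fKstar K x) < r"
      unfolding X_def[symmetric] using r by simp
  qed
qed

end



theorem theorem5p18:
  fixes K :: "nat \<Rightarrow> nat"
  assumes "\<forall>k\<ge>1. K k > 0"
    and "filterlim K at_top sequentially"
    and "cont_LB_dist K"
  shows "\<exists>f finf. unif_cont f finf \<and> bij_betw finf {0..1} {0..1} \<and>
           (\<forall>p\<in>{0..1}. fKstar K (finf p) = p) \<and>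
           equidistributed (\<lambda>n. the_inv_into {1..} f (real (K n)))"
proof -
  define F where "F = fKstar K"
  have fc: "continuous_on {0..1} F" and fm: "strict_mono_on {0..1} F"
    using assms(3) by (auto simp: cont_LB_dist_def F_def)
  have f0: "F 0 = 0" and f1: "F 1 = 1" by (simp_all add: F_def fKstar_def)
  note G = fc fm f0 f1
  define gi where "gi = ginv F"
  define f where "f = ff F"
  have gi_bij: "bij_betw gi {0..1} {0..1}" using ginv_bij[OF G] by (simp add: gi_def)
  have gi_inv: "\<forall>p\<in>{0..1}. F (gi p) = p" using g_ginv[OF G] by (simp add: gi_def)
  have f_piece: "f t = real (FF m) + real (FF (m - 1)) * gi (t - real m)"
    if "m \<ge> 1" "real m \<le> t" "t \<le> real m + 1" for m t
    using ff_piece[OF G that] by (simp add: f_def gi_def)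
  have f_inj: "inj_on f {1..}" using strict_mono_on_imp_inj_on[OF ff_mono[OF G]] by (simp add: f_def)
  have uc: "unif_cont f gi"
    unfolding unif_cont_def
  proof (intro conjI)
    show "continuous_on {1..} f" using ff_cont[OF G] by (simp add: f_def)
    show "strict_mono_on {1..} f" using ff_mono[OF G] by (simp add: f_def)
    show "\<forall>n\<ge>1. f (real n) = real (FF n)" using ff_nat[OF G] by (simp add: f_def)
    show "continuous_on {0..1} gi" using ginv_cont[OF G] by (simp add: gi_def)
    show "strict_mono_on {0..1} gi" using ginv_mono[OF G] by (simp add: gi_def)
    show "uniform_limit {0..1} (\<lambda>n p. (f (real n + p) - f (real n)) / (f (real n + 1) - f (real n))) gi sequentially"
      unfolding uniform_limit_iff
    proof (intro allI impI)
      fix e :: real assume e: "e > 0"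
      show "\<forall>\<^sub>F n in sequentially. \<forall>p\<in>{0..1}. dist ((f (real n + p) - f (real n)) / (f (real n + 1) - f (real n))) (gi p) < e"
        using eventually_ge_at_top[of "1::nat"]
      proof (rule eventually_mono)
        fix n :: nat assume n: "1 \<le> n"
        show "\<forall>p\<in>{0..1}. dist ((f (real n + p) - f (real n)) / (f (real n + 1) - f (real n))) (gi p) < e"
        proof
          fix p :: real assume p: "p \<in> {0..1}"
          have a: "f (real n + p) = real (FF n) + real (FF (n - 1)) * gi p" using f_piece[of n "real n + p"] n p by simp
          have b: "f (real n) = real (FF n)" using f_piece[of n "real n"] n ginv0[OF G] by (simp add: gi_def)
          have c: "f (real n + 1) = real (FF n) + real (FF (n - 1))" using f_piece[of n "real n + 1"] n ginv1[OF G] by (simp add: gi_def)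
          have "real (FF (n - 1)) > 0" using FF_pos by simp
          then have "(f (real n + p) - f (real n)) / (f (real n + 1) - f (real n)) = gi p" using a b c by simp
          then show "dist ((f (real n + p) - f (real n)) / (f (real n + 1) - f (real n))) (gi p) < e" using e by simp
        qed
      qed
    qed
  qed
  have key: "frac (the_inv_into {1..} f (real (K k))) \<le> \<beta> \<longleftrightarrow> rK (K k) \<le> gi \<beta>"
    if k: "k \<ge> 1" and b: "\<beta> \<in> {0..1}" for k \<beta>
  proof -
    have K1: "K k \<ge> 1" using assms(1) k by auto
    define M where "M = length (zeck (K k))"
    define r where "r = rK (K k)"
    have M1: "M \<ge> 1" using zeck_len_ge1[OF K1] by (simp add: M_def)
    have r01: "0 \<le> r" "r < 1" using rK_range[OF K1] by (auto simp: r_def)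
    define q where "q = F r"
    have q0: "q \<ge> 0" using g_le[OF G, of 0 r] r01 f0 by (simp add: q_def)
    have q1: "q < 1" using strict_mono_onD[OF fm, of r 1] r01 f1 by (simp add: q_def)
    have "f (real M + q) = real (FF M) + real (FF (M - 1)) * gi q" using f_piece[of M "real M + q"] M1 q0 q1 by simp
    also have "gi q = r" using ginv_g[OF G, of r] r01 by (simp add: gi_def q_def)
    also have "real (FF M) + real (FF (M - 1)) * r = real (K k)"
      using FF_pos[of "M - 1"] by (simp add: r_def rK_def M_def[symmetric])
    finally have fe: "f (real M + q) = real (K k)" .
    have "the_inv_into {1..} f (real (K k)) = real M + q"
      using the_inv_into_f_eq[OF f_inj fe] M1 q0 by simp
    moreover have "frac (real M + q) = q" using q0 q1 by (simp add: frac_unique_iff)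
    ultimately have "frac (the_inv_into {1..} f (real (K k))) = q" by simp
    moreover have "q \<le> \<beta> \<longleftrightarrow> r \<le> gi \<beta>"
    proof -
      have "\<beta> = F (gi \<beta>)" using gi_inv b by simp
      moreover have "gi \<beta> \<in> {0..1}" using gi_bij b by (auto simp: bij_betw_def)
      ultimately show ?thesis using g_le_iff[OF G, of r "gi \<beta>"] r01 by (simp add: q_def)
    qed
    ultimately show ?thesis by (simp add: r_def)
  qed
  have ed: "equidistributed (\<lambda>n. the_inv_into {1..} f (real (K n)))"
    unfolding equidistributed_def
  proof
    fix \<beta> :: real assume b: "\<beta> \<in> {0..1}"
    have seteq: "{k \<in> {1..n}. frac (the_inv_into {1..} f (real (K k))) \<le> \<beta>} = {k \<in> {1..n}. rK (K k) \<le> gi \<beta>}" for n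
      using key b by auto
    have gb: "gi \<beta> \<in> {0..1}" using gi_bij b by (auto simp: bij_betw_def)
    show "(\<lambda>n. real (card {k \<in> {1..n}. frac (the_inv_into {1..} f (real (K k))) \<le> \<beta>}) / real n) \<longlonglongrightarrow> \<beta>"
      unfolding seteq
    proof (cases "gi \<beta> < 1")
      case True
      have "(\<lambda>n. real (card {k \<in> {1..n}. rK (K k) \<le> gi \<beta>}) / real n) \<longlonglongrightarrow> fKstar K (gi \<beta>)"
        using cnt_lim[OF assms, of "gi \<beta>"] gb True by simp
      moreover have "fKstar K (gi \<beta>) = \<beta>" using gi_inv b by (simp add: F_def)
      ultimately show "(\<lambda>n. real (card {k \<in> {1..n}. rK (K k) \<le> gi \<beta>}) / real n) \<longlonglongrightarrow> \<beta>" by simp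
    next
      case False
      then have g1: "gi \<beta> = 1" using gb by simp
      then have b1: "\<beta> = 1" using gi_inv b f1 by force
      have "{k \<in> {1..n}. rK (K k) \<le> gi \<beta>} = {1..n}" for n
      proof -
        have "rK (K k) \<le> 1" if "k \<in> {1..n}" for k
          using rK_range[of "K k"] assms(1) that by auto
        then show ?thesis using g1 by auto
      qed
      then have e: "(\<lambda>n. real (card {k \<in> {1..n}. rK (K k) \<le> gi \<beta>}) / real n) = (\<lambda>n. real n / real n)"
        by simp
      have "eventually (\<lambda>n. 1 = real n / real n) sequentially"
        using eventually_ge_at_top[of "1::nat"] by (rule eventually_mono) simp
      then have "(\<lambda>n. real n / real n) \<longlonglongrightarrow> 1"
        by (rule Lim_transform_eventually[OF tendsto_const])
      then show "(\<lambda>n. real (card {k \<in> {1..n}. rK (K k) \<le> gi \<beta>}) / real n) \<longlonglongrightarrow> \<beta>"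
        unfolding e using b1 by simp
    qed
  qed
  show ?thesis using uc gi_bij gi_inv ed unfolding F_def by blast
qed

end
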